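(* Let $(S,\mathcal C)$ be a connectoid and $T$ a normal tree of $(S,\mathcal C)$. For every end $\omega$ of the tree $T$, let $R_\omega$ be the unique ray in $\omega$ starting at the root of $T$. Then $V(R_\omega)$ converges to an end $\eta(\omega)\in\Omega(S,\mathcal C)$, and the map $\omega\mapsto\eta(\omega)$ is a bijection between the ends of $T$ and the ends of $(S,\mathcal C)$ lying in the closure of $V(T)$.
   Context: A connectoid is given by a set $S$ and a set $\mathcal F$ of finite subsets of $S$ such that (i) $F\cup F'\in\mathcal F$ whenever $F,F'\in\mathcal F$ and $F\cap F'\neq\emptyset$, and (ii) $\emptyset\in\mathcal F$ and $\{s\}\in\mathcal F$ for every $s\in S$. A set $C\subseteq S$ is connected if for all $x,y\in C$ there is $F\in\mathcal F$ with $F\subseteq C$ and $x,y\in F$; $\mathcal C$ is the set of connected sets. For $S'\subseteq S$, a component of $S'$ is a maximal connected subset, and $\mathcal K(S')$ is the set of components of $S'$. "Almost all" means all but finitely many. A necklace is a connected set $N$ for which there is a family $(H_n)_{n\in\mathbb N}$ of finite connected sets with $N=\bigcup_n H_n$ and $H_i\cap H_j\neq\emptyset$ iff $|i-j|\le 1$. For finite $X\subseteq S$, the $X$-tail of $N$ is the unique element of $\mathcal K(N\setminus X)$ containing almost all elements of $N$. Two necklaces are equivalent if for every finite $X\subseteq S$ their $X$-tails lie in the same element of $\mathcal K(S\setminus X)$. An end is an equivalence class of necklaces; $\Omega(S,\mathcal C)$ is the set of ends; $K(X,\omega)$ is the element of $\mathcal K(S\setminus X)$ containing the $X$-tails of the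 necklaces in $\omega$. An infinite set $Y\subseteq S$ converges to an end $\nu$ if $K(X,\nu)$ contains almost all elements of $Y$ for every finite $X\subseteq S$. An end $\nu$ lies in the closure of a set $U\subseteq S$ if $K(X,\nu)\cap U\neq\emptyset$ for every finite $X\subseteq S$. For a rooted tree $T$ with tree order $\le_T$ and $t\in V(T)$, let $\mathrm{Down}^\circ_T(t)=\{x\in V(T):x<_T t\}$. A weak normal tree of $(S,\mathcal C)$ is a rooted undirected tree $T$ with $V(T)\subseteq S$ such that (1) for every $C\in\mathcal C$ and every two $\le_T$-incomparable $u,v\in C\cap V(T)$ there is $w\in C$ with $w\le_T u$ and $w\le_T v$, and (2) for all $u\le_T v$ in $V(T)$ there is $C\in\mathcal C$ containing $u,v$ with $C\cap\mathrm{Down}^\circ_T(u)=\emptyset$. It is a normal tree if additionally for every rooted ray $R$ of $T$ some necklace contains almost all vertices of $R$. Ends of $T$ are its graph-theoretic ends (equivalence classes of rays). *)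

theory Defs
  imports Main
begin

definition connectoid :: "'a set \<Rightarrow> 'a set set \<Rightarrow> bool" where
  "connectoid S Fs \<longleftrightarrow>
     (\<forall>F\<in>Fs. finite F \<and> F \<subseteq> S) \<and>
     (\<forall>F\<in>Fs. \<forall>F'\<in>Fs. F \<inter> F' \<noteq> {} \<longrightarrow> F \<union> F' \<in> Fs) \<and>
     {} \<in> Fs \<and> (\<forall>s\<in>S. {s} \<in> Fs)"

definition cconnected :: "'a set \<Rightarrow> 'a set set \<Rightarrow> 'a set \<Rightarrow> bool" where
  "cconnected S Fs C \<longleftrightarrow> C \<subseteq> S \<and>
     (\<forall>x\<in>C. \<forall>y\<in>C. \<exists>F\<in>Fs. F \<subseteq> C \<and> x \<in> F \<and> y \<in> F)"

definition ccomponents :: "'a set \<Rightarrow> 'a set set \<Rightarrow> 'a set \<Rightarrow> 'a set set" where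
  "ccomponents S Fs S' = {K. K \<subseteq> S' \<and> cconnected S Fs K \<and>
     (\<forall>K'. K \<subseteq> K' \<and> K' \<subseteq> S' \<and> cconnected S Fs K' \<longrightarrow> K' = K)}"

definition necklace :: "'a set \<Rightarrow> 'a set set \<Rightarrow> 'a set \<Rightarrow> bool" where
  "necklace S Fs N \<longleftrightarrow> cconnected S Fs N \<and>
     (\<exists>H :: nat \<Rightarrow> 'a set. (\<forall>n. finite (H n) \<and> cconnected S Fs (H n)) \<and>
        N = (\<Union>n. H n) \<and>
        (\<forall>i j. H i \<inter> H j \<noteq> {} \<longleftrightarrow> (i \<le> j + 1 \<and> j \<le> i + 1)))"

definition ctail :: "'a set \<Rightarrow> 'a set set \<Rightarrow> 'a set \<Rightarrow> 'a set \<Rightarrow> 'a set" where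
  "ctail S Fs N X = (THE K. K \<in> ccomponents S Fs (N - X) \<and> finite (N - K))"

definition neck_equiv :: "'a set \<Rightarrow> 'a set set \<Rightarrow> 'a set \<Rightarrow> 'a set \<Rightarrow> bool" where
  "neck_equiv S Fs N N' \<longleftrightarrow> (\<forall>X. finite X \<and> X \<subseteq> S \<longrightarrow>
     (\<exists>K\<in>ccomponents S Fs (S - X). ctail S Fs N X \<subseteq> K \<and> ctail S Fs N' X \<subseteq> K))"

definition cends :: "'a set \<Rightarrow> 'a set set \<Rightarrow> 'a set set set" where
  "cends S Fs = {{N'. necklace S Fs N' \<and> neck_equiv S Fs N N'} | N. necklace S Fs N}"

definition endK :: "'a set \<Rightarrow> 'a set set \<Rightarrow> 'a set \<Rightarrow> 'a set set \<Rightarrow> 'a set" where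
  "endK S Fs X \<omega> = (THE K. K \<in> ccomponents S Fs (S - X) \<and> (\<forall>N\<in>\<omega>. ctail S Fs N X \<subseteq> K))"

definition converges :: "'a set \<Rightarrow> 'a set set \<Rightarrow> 'a set \<Rightarrow> 'a set set \<Rightarrow> bool" where
  "converges S Fs Y \<nu> \<longleftrightarrow> infinite Y \<and>
     (\<forall>X. finite X \<and> X \<subseteq> S \<longrightarrow> finite (Y - endK S Fs X \<nu>))"

definition in_closure :: "'a set \<Rightarrow> 'a set set \<Rightarrow> 'a set \<Rightarrow> 'a set set \<Rightarrow> bool" where
  "in_closure S Fs U \<nu> \<longleftrightarrow> (\<forall>X. finite X \<and> X \<subseteq> S \<longrightarrow> endK S Fs X \<nu> \<inter> U \<noteq> {})"

definition gpath :: "('a \<times> 'a) set \<Rightarrow> 'a list \<Rightarrow> bool" where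
  "gpath E xs \<longleftrightarrow> xs \<noteq> [] \<and> distinct xs \<and>
     (\<forall>i. Suc i < length xs \<longrightarrow> (xs ! i, xs ! Suc i) \<in> E)"

definition rooted_tree :: "'a set \<Rightarrow> ('a \<times> 'a) set \<Rightarrow> 'a \<Rightarrow> bool" where
  "rooted_tree V E r \<longleftrightarrow> r \<in> V \<and> E \<subseteq> V \<times> V \<and> sym E \<and> (\<forall>x. (x, x) \<notin> E) \<and>
     (\<forall>x\<in>V. \<forall>y\<in>V. \<exists>xs. gpath E xs \<and> hd xs = x \<and> last xs = y) \<and>
     \<not> (\<exists>xs. gpath E xs \<and> 3 \<le> length xs \<and> (last xs, hd xs) \<in> E)"

definition tree_le :: "('a \<times> 'a) set \<Rightarrow> 'a \<Rightarrow> 'a \<Rightarrow> 'a \<Rightarrow> bool" where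
  "tree_le E r x y \<longleftrightarrow> (\<exists>xs. gpath E xs \<and> hd xs = r \<and> last xs = y \<and> x \<in> set xs)"

definition tree_down :: "('a \<times> 'a) set \<Rightarrow> 'a \<Rightarrow> 'a \<Rightarrow> 'a set" where
  "tree_down E r t = {x. tree_le E r x t \<and> x \<noteq> t}"

definition gray :: "'a set \<Rightarrow> ('a \<times> 'a) set \<Rightarrow> (nat \<Rightarrow> 'a) \<Rightarrow> bool" where
  "gray V E f \<longleftrightarrow> inj f \<and> (\<forall>n. f n \<in> V \<and> (f n, f (Suc n)) \<in> E)"

definition weak_normal_tree :: "'a set \<Rightarrow> 'a set set \<Rightarrow> 'a set \<Rightarrow> ('a \<times> 'a) set \<Rightarrow> 'a \<Rightarrow> bool" where
  "weak_normal_tree S Fs V E r \<longleftrightarrow> rooted_tree V E r \<and> V \<subseteq> S \<and>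
     (\<forall>C. cconnected S Fs C \<longrightarrow> (\<forall>u\<in>C \<inter> V. \<forall>v\<in>C \<inter> V.
         \<not> tree_le E r u v \<and> \<not> tree_le E r v u \<longrightarrow>
         (\<exists>w\<in>C. tree_le E r w u \<and> tree_le E r w v))) \<and>
     (\<forall>u\<in>V. \<forall>v\<in>V. tree_le E r u v \<longrightarrow>
         (\<exists>C. cconnected S Fs C \<and> u \<in> C \<and> v \<in> C \<and> C \<inter> tree_down E r u = {}))"

definition normal_tree :: "'a set \<Rightarrow> 'a set set \<Rightarrow> 'a set \<Rightarrow> ('a \<times> 'a) set \<Rightarrow> 'a \<Rightarrow> bool" where
  "normal_tree S Fs V E r \<longleftrightarrow> weak_normal_tree S Fs V E r \<and>
     (\<forall>f. gray V E f \<and> f 0 = r \<longrightarrow> (\<exists>N. necklace S Fs N \<and> finite (range f - N)))"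

definition greach :: "('a \<times> 'a) set \<Rightarrow> 'a set \<Rightarrow> 'a \<Rightarrow> 'a \<Rightarrow> bool" where
  "greach E X x y \<longleftrightarrow> (\<exists>xs. gpath E xs \<and> hd xs = x \<and> last xs = y \<and> set xs \<inter> X = {})"

definition ray_equiv :: "'a set \<Rightarrow> ('a \<times> 'a) set \<Rightarrow> (nat \<Rightarrow> 'a) \<Rightarrow> (nat \<Rightarrow> 'a) \<Rightarrow> bool" where
  "ray_equiv V E f g \<longleftrightarrow> (\<forall>X. finite X \<and> X \<subseteq> V \<longrightarrow>
     (\<exists>n m. (\<forall>k\<ge>n. f k \<notin> X) \<and> (\<forall>k\<ge>m. g k \<notin> X) \<and> greach E X (f n) (g m)))"

definition gends :: "'a set \<Rightarrow> ('a \<times> 'a) set \<Rightarrow> (nat \<Rightarrow> 'a) set set" where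
  "gends V E = {{g. gray V E g \<and> ray_equiv V E f g} | f. gray V E f}"

definition root_ray :: "'a \<Rightarrow> (nat \<Rightarrow> 'a) set \<Rightarrow> nat \<Rightarrow> 'a" where
  "root_ray r \<omega> = (THE f. f \<in> \<omega> \<and> f 0 = r)"

end

theory Submission
  imports Defs
begin

lemma conn_Fs: "connectoid S Fs \<Longrightarrow> F \<in> Fs \<Longrightarrow> finite F \<and> F \<subseteq> S"
  unfolding connectoid_def by simp

lemma conn_un: "connectoid S Fs \<Longrightarrow> F \<in> Fs \<Longrightarrow> F' \<in> Fs \<Longrightarrow> F \<inter> F' \<noteq> {} \<Longrightarrow> F \<union> F' \<in> Fs"
  unfolding connectoid_def by simp

lemma conn_single: "connectoid S Fs \<Longrightarrow> s \<in> S \<Longrightarrow> {s} \<in> Fs"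
  unfolding connectoid_def by simp

lemma cconnected_single: "connectoid S Fs \<Longrightarrow> s \<in> S \<Longrightarrow> cconnected S Fs {s}"
  unfolding cconnected_def using conn_single[of S Fs s] by auto

lemma cconnected_sub: "cconnected S Fs C \<Longrightarrow> C \<subseteq> S"
  unfolding cconnected_def by blast

lemma cconnected_F: "cconnected S Fs C \<Longrightarrow> x \<in> C \<Longrightarrow> y \<in> C \<Longrightarrow> \<exists>F\<in>Fs. F \<subseteq> C \<and> x \<in> F \<and> y \<in> F"
  unfolding cconnected_def by blast

lemma cconnected_Union:
  assumes c: "connectoid S Fs" and A: "\<And>C. C \<in> A \<Longrightarrow> cconnected S Fs C \<and> x \<in> C"
  shows "cconnected S Fs (\<Union>A)"
  unfolding cconnected_def
proof (intro conjI ballI)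
  show "\<Union>A \<subseteq> S" using A cconnected_sub by blast
next
  fix y z assume "y \<in> \<Union>A" "z \<in> \<Union>A"
  then obtain C1 C2 where C: "C1 \<in> A" "C2 \<in> A" "y \<in> C1" "z \<in> C2" by blast
  have a1: "cconnected S Fs C1" "x \<in> C1" using A[OF C(1)] by auto
  have a2: "cconnected S Fs C2" "x \<in> C2" using A[OF C(2)] by auto
  obtain F1 where F1: "F1 \<in> Fs" "F1 \<subseteq> C1" "y \<in> F1" "x \<in> F1"
    using cconnected_F[OF a1(1) C(3) a1(2)] by blast
  obtain F2 where F2: "F2 \<in> Fs" "F2 \<subseteq> C2" "x \<in> F2" "z \<in> F2"
    using cconnected_F[OF a2(1) a2(2) C(4)] by blast
  have i: "F1 \<inter> F2 \<noteq> {}" using F1(4) F2(3) by blast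
  have "F1 \<union> F2 \<in> Fs" using conn_un[OF c F1(1) F2(1) i] .
  moreover have "F1 \<union> F2 \<subseteq> \<Union>A" using F1(2) F2(2) C(1,2) by blast
  ultimately show "\<exists>F\<in>Fs. F \<subseteq> \<Union>A \<and> y \<in> F \<and> z \<in> F" using F1(3) F2(4) by blast
qed

lemma cconnected_Un:
  assumes c: "connectoid S Fs" and "cconnected S Fs A" "cconnected S Fs B" "A \<inter> B \<noteq> {}"
  shows "cconnected S Fs (A \<union> B)"
proof -
  obtain x where "x \<in> A" "x \<in> B" using assms by blast
  then have "cconnected S Fs (\<Union>{A, B})" using assms by (intro cconnected_Union[OF c]) auto
  then show ?thesis by simp
qed

lemma ccomp_D: "K \<in> ccomponents S Fs S' \<Longrightarrow> K \<subseteq> S' \<and> cconnected S Fs K"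
  unfolding ccomponents_def by blast

lemma ccomp_absorb:
  assumes c: "connectoid S Fs" and K: "K \<in> ccomponents S Fs S'" and C: "C \<subseteq> S'" "cconnected S Fs C"
    and "C \<inter> K \<noteq> {}"
  shows "C \<subseteq> K"
proof -
  have "cconnected S Fs (K \<union> C)" using cconnected_Un[OF c _ C(2)] K assms(5)
    unfolding ccomponents_def by blast
  moreover have "K \<union> C \<subseteq> S'" using K C unfolding ccomponents_def by blast
  ultimately have "K \<union> C = K" using K unfolding ccomponents_def by blast
  then show ?thesis by blast
qed

lemma ccomp_eq:
  assumes c: "connectoid S Fs" and "K1 \<in> ccomponents S Fs S'" "K2 \<in> ccomponents S Fs S'" "K1 \<inter> K2 \<noteq> {}"
  shows "K1 = K2"
proof -
  have "K1 \<subseteq> K2" using ccomp_absorb[OF c assms(3)] ccomp_D[OF assms(2)] assms(4) by blast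
  moreover have "K2 \<subseteq> K1" using ccomp_absorb[OF c assms(2)] ccomp_D[OF assms(3)] assms(4) by blast
  ultimately show ?thesis by blast
qed

lemma ccomp_exists:
  assumes c: "connectoid S Fs" and C: "C \<subseteq> S'" "cconnected S Fs C" "x \<in> C"
  shows "\<exists>K\<in>ccomponents S Fs S'. C \<subseteq> K"
proof -
  define K where "K = \<Union>{D. D \<subseteq> S' \<and> cconnected S Fs D \<and> x \<in> D}"
  have Kc: "cconnected S Fs K" unfolding K_def by (rule cconnected_Union[OF c]) blast
  have "K \<in> ccomponents S Fs S'"
    unfolding ccomponents_def
  proof (intro CollectI conjI allI impI)
    show "K \<subseteq> S'" unfolding K_def by blast
    show "cconnected S Fs K" by fact
    fix K' assume H: "K \<subseteq> K' \<and> K' \<subseteq> S' \<and> cconnected S Fs K'"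
    have "x \<in> K" unfolding K_def using C by blast
    then have "K' \<subseteq> K" using H unfolding K_def by (intro Union_upper) blast
    then show "K' = K" using H by blast
  qed
  moreover have "C \<subseteq> K" unfolding K_def using C by blast
  ultimately show ?thesis by blast
qed


lemma necklaceE:
  assumes "necklace S Fs N"
  obtains H :: "nat \<Rightarrow> 'a set" where "\<And>n. finite (H n)" "\<And>n. cconnected S Fs (H n)" "N = (\<Union>n. H n)"
    "\<And>i j. H i \<inter> H j \<noteq> {} \<longleftrightarrow> (i \<le> j + 1 \<and> j \<le> i + 1)"
proof -
  from assms obtain H :: "nat \<Rightarrow> 'a set" where H: "\<forall>n. finite (H n) \<and> cconnected S Fs (H n)"
     "N = (\<Union>n. H n)" "\<forall>i j. H i \<inter> H j \<noteq> {} \<longleftrightarrow> (i \<le> j + 1 \<and> j \<le> i + 1)"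
    unfolding necklace_def by (elim conjE exE) (rule that, assumption+)
  show ?thesis
  proof (rule that)
    show "finite (H n)" "cconnected S Fs (H n)" for n using H(1) by simp_all
    show "N = (\<Union>n. H n)" by (rule H(2))
    show "H i \<inter> H j \<noteq> {} \<longleftrightarrow> (i \<le> j + 1 \<and> j \<le> i + 1)" for i j using H(3) by blast
  qed
qed

lemma necklace_sub: "necklace S Fs N \<Longrightarrow> N \<subseteq> S"
  unfolding necklace_def cconnected_def by blast

lemma neck_infinite:
  assumes "necklace S Fs N" shows "infinite N"
proof -
  obtain H :: "nat \<Rightarrow> 'a set" where H: "\<And>n. finite (H n)" "\<And>n. cconnected S Fs (H n)" "N = (\<Union>n. H n)"
    "\<And>i j. H i \<inter> H j \<noteq> {} \<longleftrightarrow> (i \<le> j + 1 \<and> j \<le> i + 1)"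
    using necklaceE[OF assms] by metis
  have ne: "H n \<noteq> {}" for n using H(4)[of n n] by auto
  define g where "g i = (SOME x. x \<in> H (2*i))" for i
  have g: "g i \<in> H (2*i)" for i unfolding g_def using ne[of "2*i"] by (simp add: some_in_eq)
  have "inj g"
  proof (rule injI)
    fix i j assume "g i = g j"
    then have "H (2*i) \<inter> H (2*j) \<noteq> {}" using g[of i] g[of j] by auto
    then show "i = j" using H(4) by auto
  qed
  moreover have "range g \<subseteq> N" using g H(3) by blast
  ultimately show ?thesis using infinite_iff_countable_subset by blast
qed

lemma cconnected_chain:
  assumes c: "connectoid S Fs" and H: "\<And>n. cconnected S Fs (H n)" "\<And>n. H n \<inter> H (Suc n) \<noteq> {}"
  shows "cconnected S Fs (\<Union>n\<in>{n0..n0+m}. H n)"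
proof (induction m)
  case 0 then show ?case using H by simp
next
  case (Suc m)
  have "{n0..n0+Suc m} = insert (Suc (n0+m)) {n0..n0+m}" by (simp add: atLeastAtMostSuc_conv)
  then have eq: "(\<Union>n\<in>{n0..n0+Suc m}. H n) = (\<Union>n\<in>{n0..n0+m}. H n) \<union> H (n0 + Suc m)"
    by (simp add: Un_commute)
  have "H (n0+m) \<subseteq> (\<Union>n\<in>{n0..n0+m}. H n)" by (intro UN_upper) simp
  then have "(\<Union>n\<in>{n0..n0+m}. H n) \<inter> H (n0 + Suc m) \<noteq> {}" using H(2)[of "n0+m"] by auto
  then show ?case unfolding eq using cconnected_Un[OF c Suc H(1)] by blast
qed

lemma neck_tail_exists:
  assumes c: "connectoid S Fs" and N: "necklace S Fs N" and X: "finite X"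
  shows "\<exists>K\<in>ccomponents S Fs (N - X). finite (N - K)"
proof -
  obtain H :: "nat \<Rightarrow> 'a set" where H: "\<And>n. finite (H n)" "\<And>n. cconnected S Fs (H n)" "N = (\<Union>n. H n)"
    "\<And>i j. H i \<inter> H j \<noteq> {} \<longleftrightarrow> (i \<le> j + 1 \<and> j \<le> i + 1)"
    using necklaceE[OF N] by metis
  have fin1: "finite {n. x \<in> H n}" for x
  proof (cases "\<exists>i0. x \<in> H i0")
    case True
    then obtain i0 where i0: "x \<in> H i0" by blast
    have "{n. x \<in> H n} \<subseteq> {..i0+1}"
    proof
      fix n assume "n \<in> {n. x \<in> H n}"
      then have "H n \<inter> H i0 \<noteq> {}" using i0 by blast
      then have "n \<le> i0 + 1" using H(4)[of n i0] by blast
      then show "n \<in> {..i0+1}" by simp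
    qed
    moreover have "finite {..i0+1}" by simp
    ultimately show ?thesis by (rule finite_subset)
  next
    case False then show ?thesis by simp
  qed
  have "{n. H n \<inter> X \<noteq> {}} \<subseteq> (\<Union>x\<in>X. {n. x \<in> H n})" by blast
  moreover have "finite (\<Union>x\<in>X. {n. x \<in> H n})" using finite_UN_I[OF X fin1] .
  ultimately have "finite {n. H n \<inter> X \<noteq> {}}" by (rule finite_subset)
  then obtain n0 where n0: "\<forall>n\<in>{n. H n \<inter> X \<noteq> {}}. n < n0" using finite_nat_set_iff_bounded by blast
  define U where "U = (\<Union>n\<in>{n0..}. H n)"
  have Hs: "H n \<inter> H (Suc n) \<noteq> {}" for n using H(4)[of n "Suc n"] by simp
  have Uc: "cconnected S Fs U"
    unfolding cconnected_def
  proof (intro conjI ballI)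
    show "U \<subseteq> S" unfolding U_def using H(2) cconnected_sub by blast
  next
    fix y z assume "y \<in> U" "z \<in> U"
    then obtain a b where ab: "a \<ge> n0" "b \<ge> n0" "y \<in> H a" "z \<in> H b" unfolding U_def by blast
    let ?P = "\<Union>n\<in>{n0..n0+(a+b)}. H n"
    have Pc: "cconnected S Fs ?P" by (rule cconnected_chain[where H=H, OF c H(2) Hs])
    have yP: "y \<in> ?P" using ab by (intro UN_I[where a=a]) auto
    have zP: "z \<in> ?P" using ab by (intro UN_I[where a=b]) auto
    obtain F where F: "F \<in> Fs" "F \<subseteq> ?P" "y \<in> F" "z \<in> F" using cconnected_F[OF Pc yP zP] by blast
    have "?P \<subseteq> U"
    proof
      fix x assume "x \<in> ?P"
      then obtain n where "n \<in> {n0..n0+(a+b)}" "x \<in> H n" by blast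
      then show "x \<in> U" unfolding U_def by auto
    qed
    with F(2) have "F \<subseteq> U" by (rule subset_trans)
    then show "\<exists>F\<in>Fs. F \<subseteq> U \<and> y \<in> F \<and> z \<in> F" using F(1,3,4) by blast
  qed
  have "U \<subseteq> N - X"
  proof
    fix x assume "x \<in> U"
    then obtain n where n: "n \<ge> n0" "x \<in> H n" unfolding U_def by blast
    have "x \<notin> X"
    proof
      assume "x \<in> X"
      then have "n \<in> {n. H n \<inter> X \<noteq> {}}" using n by blast
      then show False using n0 n by auto
    qed
    then show "x \<in> N - X" using n H(3) by blast
  qed
  moreover have "H n0 \<noteq> {}" using H(4)[of n0 n0] by auto
  then obtain y where "y \<in> U" unfolding U_def by blast
  ultimately obtain K where K: "K \<in> ccomponents S Fs (N - X)" "U \<subseteq> K"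
    using ccomp_exists[OF c _ Uc] by blast
  have "N - K \<subseteq> (\<Union>n\<in>{..<n0}. H n)"
  proof
    fix x assume x: "x \<in> N - K"
    then obtain n where n: "x \<in> H n" using H(3) by blast
    have "\<not> n \<ge> n0"
    proof
      assume "n \<ge> n0"
      then have "x \<in> U" unfolding U_def using n by blast
      then show False using x K(2) by blast
    qed
    then show "x \<in> (\<Union>n\<in>{..<n0}. H n)" using n by auto
  qed
  moreover have "finite (\<Union>n\<in>{..<n0}. H n)" using H(1) by simp
  ultimately have "finite (N - K)" by (rule finite_subset)
  then show ?thesis using K by blast
qed

lemma cofinite_inter:
  assumes "infinite N" "finite (N - A)" "finite (N - B)" shows "A \<inter> B \<noteq> {}"
proof
  assume "A \<inter> B = {}"
  then have "N \<subseteq> (N - A) \<union> (N - B)" by blast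
  moreover have "finite ((N - A) \<union> (N - B))" using assms(2,3) by simp
  ultimately have "finite N" by (rule finite_subset)
  then show False using assms(1) by contradiction
qed

lemma ctail_props:
  assumes c: "connectoid S Fs" and N: "necklace S Fs N" and X: "finite X"
  shows "ctail S Fs N X \<in> ccomponents S Fs (N - X) \<and> finite (N - ctail S Fs N X)"
proof -
  obtain K where K: "K \<in> ccomponents S Fs (N - X)" "finite (N - K)" using neck_tail_exists[OF c N X] by blast
  have inf: "infinite N" using neck_infinite[OF N] .
  have "K' = K" if "K' \<in> ccomponents S Fs (N - X)" "finite (N - K')" for K'
  proof -
    have "K' \<inter> K \<noteq> {}" using cofinite_inter[OF inf that(2) K(2)] .
    then show ?thesis using ccomp_eq[OF c that(1) K(1)] by blast
  qed
  then have "\<exists>!K. K \<in> ccomponents S Fs (N - X) \<and> finite (N - K)" using K by blast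
  then show ?thesis unfolding ctail_def by (rule theI')
qed

lemma ctail_basic:
  assumes c: "connectoid S Fs" and N: "necklace S Fs N" and X: "finite X"
  shows "ctail S Fs N X \<subseteq> N - X" "cconnected S Fs (ctail S Fs N X)" "ctail S Fs N X \<noteq> {}"
    "finite (N - ctail S Fs N X)"
proof -
  note P = ctail_props[OF c N X]
  show "ctail S Fs N X \<subseteq> N - X" "cconnected S Fs (ctail S Fs N X)" using ccomp_D P by blast+
  show "finite (N - ctail S Fs N X)" using P by blast
  show "ctail S Fs N X \<noteq> {}" using P neck_infinite[OF N] by auto
qed

lemma ctail_in_comp:
  assumes c: "connectoid S Fs" and N: "necklace S Fs N" and X: "finite X"
  shows "\<exists>K\<in>ccomponents S Fs (S - X). ctail S Fs N X \<subseteq> K"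
proof -
  note B = ctail_basic[OF c N X]
  obtain x where "x \<in> ctail S Fs N X" using B(3) by blast
  moreover have "ctail S Fs N X \<subseteq> S - X" using B(1) necklace_sub[OF N] by blast
  ultimately show ?thesis using ccomp_exists[OF c _ B(2)] by blast
qed

lemma neck_equiv_refl: assumes "connectoid S Fs" "necklace S Fs N" shows "neck_equiv S Fs N N"
  unfolding neck_equiv_def
proof (intro allI impI)
  fix X assume "finite X \<and> X \<subseteq> S"
  then obtain K where "K\<in>ccomponents S Fs (S - X)" "ctail S Fs N X \<subseteq> K"
    using ctail_in_comp[OF assms] by blast
  then show "\<exists>K\<in>ccomponents S Fs (S - X). ctail S Fs N X \<subseteq> K \<and> ctail S Fs N X \<subseteq> K"
    by (intro bexI[where x=K]) simp_all
qed

lemma neck_equiv_sym: assumes "neck_equiv S Fs N N'" shows "neck_equiv S Fs N' N"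
  unfolding neck_equiv_def
proof (intro allI impI)
  fix X assume "finite X \<and> X \<subseteq> S"
  then obtain K where "K\<in>ccomponents S Fs (S - X)" "ctail S Fs N X \<subseteq> K" "ctail S Fs N' X \<subseteq> K"
    using assms unfolding neck_equiv_def by meson
  then show "\<exists>K\<in>ccomponents S Fs (S - X). ctail S Fs N' X \<subseteq> K \<and> ctail S Fs N X \<subseteq> K"
    by (intro bexI[where x=K]) simp_all
qed

lemma neck_equiv_trans:
  assumes c: "connectoid S Fs" and N': "necklace S Fs N'"
    and "neck_equiv S Fs N N'" "neck_equiv S Fs N' N''"
  shows "neck_equiv S Fs N N''"
  unfolding neck_equiv_def
proof (intro allI impI)
  fix X assume X: "finite X \<and> X \<subseteq> S"
  obtain K1 where K1: "K1\<in>ccomponents S Fs (S - X)" "ctail S Fs N X \<subseteq> K1" "ctail S Fs N' X \<subseteq> K1"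
    using assms(3) X unfolding neck_equiv_def by blast
  obtain K2 where K2: "K2\<in>ccomponents S Fs (S - X)" "ctail S Fs N' X \<subseteq> K2" "ctail S Fs N'' X \<subseteq> K2"
    using assms(4) X unfolding neck_equiv_def by blast
  have "K1 \<inter> K2 \<noteq> {}" using ctail_basic(3)[OF c N'] X K1(3) K2(2) by blast
  then have "K1 = K2" using ccomp_eq[OF c K1(1) K2(1)] by blast
  then show "\<exists>K\<in>ccomponents S Fs (S - X). ctail S Fs N X \<subseteq> K \<and> ctail S Fs N'' X \<subseteq> K"
    using K1 K2 by blast
qed

definition ncls :: "'a set \<Rightarrow> 'a set set \<Rightarrow> 'a set \<Rightarrow> 'a set set" where
  "ncls S Fs N = {N'. necklace S Fs N' \<and> neck_equiv S Fs N N'}"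

lemma cends_iff: "\<nu> \<in> cends S Fs \<longleftrightarrow> (\<exists>N. necklace S Fs N \<and> \<nu> = ncls S Fs N)"
  unfolding cends_def ncls_def by blast

lemma ncls_self: "connectoid S Fs \<Longrightarrow> necklace S Fs N \<Longrightarrow> N \<in> ncls S Fs N"
  unfolding ncls_def using neck_equiv_refl by blast

lemma ncls_eq:
  assumes c: "connectoid S Fs" and N: "necklace S Fs N" and N': "N' \<in> ncls S Fs N"
  shows "ncls S Fs N' = ncls S Fs N"
proof -
  have N'n: "necklace S Fs N'" and e: "neck_equiv S Fs N N'" using N' unfolding ncls_def by auto
  show ?thesis unfolding ncls_def
    using neck_equiv_trans[OF c N'n e] neck_equiv_trans[OF c N neck_equiv_sym[OF e]] N'n N by blast
qed

lemma endK_props: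
  assumes c: "connectoid S Fs" and N: "necklace S Fs N" and X: "finite X" "X \<subseteq> S"
  shows "endK S Fs X (ncls S Fs N) \<in> ccomponents S Fs (S - X) \<and>
         (\<forall>N'\<in>ncls S Fs N. ctail S Fs N' X \<subseteq> endK S Fs X (ncls S Fs N))"
proof -
  obtain K where K: "K \<in> ccomponents S Fs (S - X)" "ctail S Fs N X \<subseteq> K"
    using ctail_in_comp[OF c N X(1)] by blast
  have allK: "\<forall>N'\<in>ncls S Fs N. ctail S Fs N' X \<subseteq> K"
  proof
    fix N' assume "N' \<in> ncls S Fs N"
    then have "neck_equiv S Fs N N'" unfolding ncls_def by blast
    then obtain K' where K': "K'\<in>ccomponents S Fs (S - X)" "ctail S Fs N X \<subseteq> K'" "ctail S Fs N' X \<subseteq> K'"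
      using X unfolding neck_equiv_def by blast
    have "K' \<inter> K \<noteq> {}" using ctail_basic(3)[OF c N X(1)] K(2) K'(2) by blast
    then have "K' = K" using ccomp_eq[OF c K'(1) K(1)] by blast
    then show "ctail S Fs N' X \<subseteq> K" using K' by blast
  qed
  have "K'' = K" if "K'' \<in> ccomponents S Fs (S - X) \<and> (\<forall>N'\<in>ncls S Fs N. ctail S Fs N' X \<subseteq> K'')" for K''
  proof -
    have "ctail S Fs N X \<subseteq> K''" using that ncls_self[OF c N] by blast
    then have "K'' \<inter> K \<noteq> {}" using ctail_basic(3)[OF c N X(1)] K(2) by blast
    then show ?thesis using ccomp_eq[OF c _ K(1)] that by blast
  qed
  then have "\<exists>!K. K \<in> ccomponents S Fs (S - X) \<and> (\<forall>N'\<in>ncls S Fs N. ctail S Fs N' X \<subseteq> K)"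
    using K allK by blast
  then show ?thesis unfolding endK_def by (rule theI')
qed

lemma endK_comp:
  assumes c: "connectoid S Fs" and nu: "\<nu> \<in> cends S Fs" and X: "finite X" "X \<subseteq> S"
  shows "endK S Fs X \<nu> \<in> ccomponents S Fs (S - X)"
  using endK_props[OF c _ X] nu unfolding cends_iff by blast

lemma endK_tail:
  assumes c: "connectoid S Fs" and N: "necklace S Fs N" and X: "finite X" "X \<subseteq> S"
  shows "ctail S Fs N X \<subseteq> endK S Fs X (ncls S Fs N)"
  using endK_props[OF c N X] ncls_self[OF c N] by blast

lemma ctail_mono:
  assumes c: "connectoid S Fs" and N: "necklace S Fs N" and X: "finite X'" "X \<subseteq> X'"
  shows "ctail S Fs N X' \<subseteq> ctail S Fs N X"
proof -
  have fX: "finite X" using X by (meson finite_subset)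
  note B' = ctail_basic[OF c N X(1)] and B = ctail_basic[OF c N fX]
  have "ctail S Fs N X' \<inter> ctail S Fs N X \<noteq> {}"
    using cofinite_inter[OF neck_infinite[OF N] B'(4) B(4)] .
  then show ?thesis using ccomp_absorb[OF c ctail_props[OF c N fX, THEN conjunct1], of "ctail S Fs N X'"]
    B'(1,2) X(2) by blast
qed

lemma endK_mono:
  assumes c: "connectoid S Fs" and nu: "\<nu> \<in> cends S Fs" and X: "finite X'" "X' \<subseteq> S" "X \<subseteq> X'"
  shows "endK S Fs X' \<nu> \<subseteq> endK S Fs X \<nu>"
proof -
  obtain N where N: "necklace S Fs N" "\<nu> = ncls S Fs N" using nu cends_iff by blast
  have fX: "finite X" "X \<subseteq> S" using X by (meson finite_subset, blast)
  have K': "endK S Fs X' \<nu> \<in> ccomponents S Fs (S - X')" using endK_comp[OF c nu X(1,2)] .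
  have K: "endK S Fs X \<nu> \<in> ccomponents S Fs (S - X)" using endK_comp[OF c nu fX] .
  have "ctail S Fs N X' \<subseteq> endK S Fs X' \<nu>" using endK_tail[OF c N(1) X(1,2)] N(2) by simp
  moreover have "ctail S Fs N X' \<subseteq> endK S Fs X \<nu>"
    using ctail_mono[OF c N(1) X(1) X(3)] endK_tail[OF c N(1) fX] N(2) by simp
  moreover have "ctail S Fs N X' \<noteq> {}" using ctail_basic(3)[OF c N(1) X(1)] .
  ultimately have "endK S Fs X' \<nu> \<inter> endK S Fs X \<nu> \<noteq> {}" by blast
  moreover have "endK S Fs X' \<nu> \<subseteq> S - X" "cconnected S Fs (endK S Fs X' \<nu>)"
    using ccomp_D[OF K'] X(3) by blast+
  ultimately show ?thesis using ccomp_absorb[OF c K] by blast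
qed

lemma ends_separate:
  assumes c: "connectoid S Fs" and nu: "\<nu> \<in> cends S Fs" "\<nu>' \<in> cends S Fs" and ne: "\<nu> \<noteq> \<nu>'"
  shows "\<exists>X. finite X \<and> X \<subseteq> S \<and> endK S Fs X \<nu> \<inter> endK S Fs X \<nu>' = {}"
proof -
  obtain N where N: "necklace S Fs N" "\<nu> = ncls S Fs N" using nu(1) cends_iff by blast
  obtain N' where N': "necklace S Fs N'" "\<nu>' = ncls S Fs N'" using nu(2) cends_iff by blast
  have "\<not> neck_equiv S Fs N N'"
  proof
    assume "neck_equiv S Fs N N'"
    then have "N' \<in> ncls S Fs N" using N'(1) unfolding ncls_def by blast
    then show False using ncls_eq[OF c N(1)] N N' ne by simp
  qed
  then obtain X where X: "finite X" "X \<subseteq> S"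
    and nK: "\<not> (\<exists>K\<in>ccomponents S Fs (S - X). ctail S Fs N X \<subseteq> K \<and> ctail S Fs N' X \<subseteq> K)"
    unfolding neck_equiv_def by blast
  have t1: "ctail S Fs N X \<subseteq> endK S Fs X \<nu>" using endK_tail[OF c N(1) X] N(2) by simp
  have t2: "ctail S Fs N' X \<subseteq> endK S Fs X \<nu>'" using endK_tail[OF c N'(1) X] N'(2) by simp
  have "endK S Fs X \<nu> \<inter> endK S Fs X \<nu>' = {}"
  proof (rule ccontr)
    assume "endK S Fs X \<nu> \<inter> endK S Fs X \<nu>' \<noteq> {}"
    then have "endK S Fs X \<nu> = endK S Fs X \<nu>'"
      using ccomp_eq[OF c endK_comp[OF c nu(1) X] endK_comp[OF c nu(2) X]] by blast
    then show False using nK t1 t2 endK_comp[OF c nu(1) X] by auto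
  qed
  then show ?thesis using X by blast
qed

lemma converges_unique:
  assumes c: "connectoid S Fs" and nu: "\<nu> \<in> cends S Fs" "\<nu>' \<in> cends S Fs"
    and "converges S Fs Y \<nu>" "converges S Fs Y \<nu>'"
  shows "\<nu> = \<nu>'"
proof (rule ccontr)
  assume "\<nu> \<noteq> \<nu>'"
  then obtain X where X: "finite X" "X \<subseteq> S" "endK S Fs X \<nu> \<inter> endK S Fs X \<nu>' = {}"
    using ends_separate[OF c nu] by blast
  have "infinite Y" "finite (Y - endK S Fs X \<nu>)" "finite (Y - endK S Fs X \<nu>')"
    using assms(4,5) X unfolding converges_def by auto
  then show False using cofinite_inter X(3) by blast
qed

lemma converges_neck:
  assumes c: "connectoid S Fs" and N: "necklace S Fs N" and Y: "infinite Y" "finite (Y - N)"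
  shows "converges S Fs Y (ncls S Fs N)"
  unfolding converges_def
proof (intro conjI allI impI)
  show "infinite Y" by fact
  fix X assume X: "finite X \<and> X \<subseteq> S"
  have "Y - endK S Fs X (ncls S Fs N) \<subseteq> (Y - N) \<union> (N - ctail S Fs N X)"
    using endK_tail[OF c N] X by blast
  moreover have "finite ((Y - N) \<union> (N - ctail S Fs N X))" using Y(2) ctail_basic(4)[OF c N] X by simp
  ultimately show "finite (Y - endK S Fs X (ncls S Fs N))" by (rule finite_subset)
qed


definition walk :: "('a \<times> 'a) set \<Rightarrow> 'a list \<Rightarrow> bool" where
  "walk E xs \<longleftrightarrow> xs \<noteq> [] \<and> successively (\<lambda>x y. (x, y) \<in> E) xs"

lemma gpath_walk: "gpath E xs \<longleftrightarrow> walk E xs \<and> distinct xs"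
  unfolding gpath_def walk_def successively_conv_nth by blast

lemma walk_Cons: "walk E (a # xs) \<longleftrightarrow> (xs = [] \<or> ((a, hd xs) \<in> E \<and> walk E xs))"
  unfolding walk_def by (cases xs) auto

lemma walk_append: "xs \<noteq> [] \<Longrightarrow> ys \<noteq> [] \<Longrightarrow>
   walk E (xs @ ys) \<longleftrightarrow> walk E xs \<and> walk E ys \<and> (last xs, hd ys) \<in> E"
  unfolding walk_def by (auto simp: successively_append_iff)

lemma successively_sym:
  assumes "sym E" shows "successively (\<lambda>x y. (y, x) \<in> E) xs \<longleftrightarrow> successively (\<lambda>x y. (x, y) \<in> E) xs"
proof -
  have "(\<lambda>x y. (y, x) \<in> E) = (\<lambda>x y. (x, y) \<in> E)" using assms by (auto simp: sym_def)
  from arg_cong[OF this, of "\<lambda>P. successively P xs"] show ?thesis by simp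
qed

lemma walk_rev: "sym E \<Longrightarrow> walk E (rev xs) \<longleftrightarrow> walk E xs"
  unfolding walk_def by (simp add: successively_sym)

lemma walk_take: "walk E xs \<Longrightarrow> 0 < k \<Longrightarrow> walk E (take k xs)"
proof -
  assume w: "walk E xs" and k: "0 < k"
  have "successively (\<lambda>x y. (x, y) \<in> E) (take k xs @ drop k xs)" using w unfolding walk_def by simp
  then have "successively (\<lambda>x y. (x, y) \<in> E) (take k xs)" unfolding successively_append_iff by (elim conjE)
  moreover have "take k xs \<noteq> []" using w k unfolding walk_def by simp
  ultimately show ?thesis unfolding walk_def by simp
qed

lemma walk_nth: "walk E xs \<Longrightarrow> Suc i < length xs \<Longrightarrow> (xs ! i, xs ! Suc i) \<in> E"
  unfolding walk_def using successively_nth by fast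

lemma walk_set:
  assumes "walk E xs" "hd xs \<in> V" "E \<subseteq> V \<times> V" shows "set xs \<subseteq> V"
  using assms
proof (induction xs)
  case Nil then show ?case by simp
next
  case (Cons a xs)
  show ?case
  proof (cases "xs = []")
    case True then show ?thesis using Cons(3) by simp
  next
    case False
    then have e: "(a, hd xs) \<in> E" and w: "walk E xs" using Cons(2) by (simp_all add: walk_Cons)
    from e Cons(4) have "hd xs \<in> V" by (auto simp: subset_iff)
    from Cons.IH[OF w this Cons(4)] have "set xs \<subseteq> V" .
    then show ?thesis using Cons(3) by simp
  qed
qed

locale rtree =
  fixes V :: "'a set" and E :: "('a \<times> 'a) set" and r :: 'a
  assumes rt: "rooted_tree V E r"
begin

lemma r_V: "r \<in> V" using rt unfolding rooted_tree_def by (elim conjE) assumption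
lemma E_V: "E \<subseteq> V \<times> V" using rt unfolding rooted_tree_def by (elim conjE) assumption
lemma symE: "sym E" using rt unfolding rooted_tree_def by (elim conjE) assumption
lemma symE': "(x, y) \<in> E \<Longrightarrow> (y, x) \<in> E" using symE unfolding sym_def by blast
lemma connV0: "\<forall>x\<in>V. \<forall>y\<in>V. \<exists>xs. gpath E xs \<and> hd xs = x \<and> last xs = y"
  using rt unfolding rooted_tree_def by (elim conjE) assumption
lemma connV: "x \<in> V \<Longrightarrow> y \<in> V \<Longrightarrow> \<exists>xs. gpath E xs \<and> hd xs = x \<and> last xs = y"
  using connV0 by simp
lemma acyc0: "\<not> (\<exists>xs. gpath E xs \<and> 3 \<le> length xs \<and> (last xs, hd xs) \<in> E)"
  using rt unfolding rooted_tree_def by (elim conjE) assumption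
lemma acyc: "gpath E xs \<Longrightarrow> 3 \<le> length xs \<Longrightarrow> (last xs, hd xs) \<notin> E"
  using acyc0 by simp

lemma no_cycle:
  assumes a: "gpath E (a # xs')" "gpath E (a # ys')" "xs' \<noteq> []" "ys' \<noteq> []"
    "last xs' = last ys'" "hd xs' \<noteq> hd ys'"
  shows False
proof -
  let ?R = "\<lambda>x y. (x, y) \<in> E"
  have "\<exists>x\<in>set xs'. x \<in> set ys'" using a(3,4,5) by (metis last_in_set)
  then obtain p z p' where xs': "xs' = p @ z # p'" "z \<in> set ys'" "\<forall>y\<in>set p. y \<notin> set ys'"
    by (rule split_list_first_propE)
  obtain q q' where ys': "ys' = q @ z # q'" using xs'(2) by (meson split_list)
  have dx: "distinct (a # xs')" and dy: "distinct (a # ys')" using a(1,2) by (simp_all only: gpath_walk)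
  have wx: "walk E (a # xs')" and wy: "walk E (a # ys')" using a(1,2) by (simp_all only: gpath_walk)
  define c where "c = a # p @ z # rev q"
  have w1: "walk E (a # p @ [z])"
  proof -
    have "walk E (take (Suc (Suc (length p))) (a # xs'))" by (rule walk_take[OF wx]) simp
    then show ?thesis using xs'(1) by simp
  qed
  have w2: "walk E (q @ [z])"
  proof -
    have "walk E ys'" using wy a(4) by (simp add: walk_Cons)
    then have "walk E (take (length (q @ [z])) ys')" by (rule walk_take) simp
    then show ?thesis using ys' by simp
  qed
  have wc: "walk E c"
  proof (cases "q = []")
    case True then show ?thesis using w1 unfolding c_def by simp
  next
    case False
    have "walk E (rev (q @ [z]))" using w2 by (simp only: walk_rev[OF symE])
    then have "walk E (z # rev q)" by simp
    moreover have "c = (a # p @ [z]) @ rev q" unfolding c_def by simp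
    moreover have "walk E (rev q)" using w2 False walk_append[of q "[z]"] walk_rev[OF symE] by auto
    moreover have "(z, hd (rev q)) \<in> E" using \<open>walk E (z # rev q)\<close> False by (simp add: walk_Cons)
    ultimately have "walk E ((a # p @ [z]) @ rev q)" using w1 False walk_append[of "a # p @ [z]" "rev q" E] by simp
    then show ?thesis unfolding c_def by simp
  qed
  have dc: "distinct c"
  proof -
    have "a \<notin> set xs'" "a \<notin> set ys'" "distinct xs'" "distinct ys'" using dx dy by auto
    then show ?thesis unfolding c_def using xs' ys' by auto
  qed
  have len: "3 \<le> length c"
  proof -
    have "p \<noteq> [] \<or> q \<noteq> []"
    proof (rule ccontr)
      assume "\<not> (p \<noteq> [] \<or> q \<noteq> [])"
      then have "hd xs' = z" "hd ys' = z" using xs'(1) ys' by auto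
      then show False using a(6) by simp
    qed
    then show ?thesis unfolding c_def by (cases p; cases q) auto
  qed
  have e0: "(a, hd ys') \<in> E" using wy a(4) by (simp add: walk_Cons)
  have "(last c, hd c) \<in> E"
  proof (cases "q = []")
    case True
    then have "last c = hd ys'" unfolding c_def using ys' by simp
    then show ?thesis using e0 symE' unfolding c_def by simp
  next
    case False
    then have "last c = hd ys'" unfolding c_def using ys' by (simp add: last_rev)
    then show ?thesis using e0 symE' unfolding c_def by simp
  qed
  moreover have "gpath E c" using wc dc by (simp only: gpath_walk)
  ultimately show False using acyc len by simp
qed

lemma path_unique:
  "gpath E xs \<Longrightarrow> gpath E ys \<Longrightarrow> hd xs = hd ys \<Longrightarrow> last xs = last ys \<Longrightarrow> xs = ys"
proof (induction xs arbitrary: ys)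
  case Nil then show ?case by (simp add: gpath_def)
next
  case (Cons a xs')
  have "ys \<noteq> []" using Cons(3) by (simp add: gpath_def)
  then obtain ys' where ys: "ys = a # ys'" using Cons(4) by (cases ys) auto
  have dx: "distinct (a # xs')" and dy: "distinct (a # ys')" using Cons(2,3) ys by (simp_all only: gpath_walk)
  show ?case
  proof (cases "xs' = []")
    case True
    show ?thesis
    proof (cases "ys' = []")
      case False
      then have "last ys' = a" using Cons(5) True ys by simp
      then show ?thesis using dy False by (metis distinct.simps(2) last_in_set)
    qed (use True ys in simp)
  next
    case False
    have ys'ne: "ys' \<noteq> []"
    proof
      assume "ys' = []"
      then have "last xs' = a" using Cons(5) False ys by simp
      then show False using dx False by (metis distinct.simps(2) last_in_set)
    qed
    have l: "last xs' = last ys'" using Cons(5) False ys'ne ys by simp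
    show ?thesis
    proof (cases "hd xs' = hd ys'")
      case True
      have "gpath E xs'" using Cons(2) False by (simp add: gpath_walk walk_Cons)
      moreover have "gpath E ys'" using Cons(3) ys ys'ne by (simp add: gpath_walk walk_Cons)
      ultimately have "xs' = ys'" using True l by (rule Cons.IH)
      then show ?thesis using ys by simp
    next
      case neq: False
      have False using no_cycle[OF Cons(2) _ False ys'ne l neq] Cons(3) ys by simp
      then show ?thesis ..
    qed
  qed
qed

lemma gpath_set: assumes "gpath E xs" "hd xs \<in> V" shows "set xs \<subseteq> V"
  using walk_set[OF _ assms(2) E_V] assms(1) by (simp add: gpath_walk)

definition rpath :: "'a \<Rightarrow> 'a list" where
  "rpath y = (THE xs. gpath E xs \<and> hd xs = r \<and> last xs = y)"

lemma rpath: assumes "y \<in> V" shows "gpath E (rpath y)" "hd (rpath y) = r" "last (rpath y) = y"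
proof -
  obtain xs where xs: "gpath E xs" "hd xs = r" "last xs = y" using connV[OF r_V assms] by blast
  have "\<exists>!xs. gpath E xs \<and> hd xs = r \<and> last xs = y"
  proof (rule ex1I[where a=xs])
    show "gpath E xs \<and> hd xs = r \<and> last xs = y" using xs by simp
    fix ys assume "gpath E ys \<and> hd ys = r \<and> last ys = y"
    then show "ys = xs" using path_unique xs by simp
  qed
  from theI'[OF this] show "gpath E (rpath y)" "hd (rpath y) = r" "last (rpath y) = y"
    unfolding rpath_def by simp_all
qed

lemma rpath_ne: "y \<in> V \<Longrightarrow> rpath y \<noteq> []"
  using rpath(1) by (simp add: gpath_def)

lemma rpath_eq: assumes "gpath E xs" "hd xs = r" "last xs = y" shows "rpath y = xs"
proof -
  have "set xs \<subseteq> V" using gpath_set assms(1,2) r_V by simp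
  moreover have "xs \<noteq> []" using assms(1) by (simp add: gpath_def)
  ultimately have "y \<in> V" using assms(3) last_in_set by (metis subsetD)
  then show ?thesis using path_unique[OF rpath(1) assms(1)] rpath(2,3) assms(2,3) by simp
qed

lemma rpath_V: "y \<in> V \<Longrightarrow> set (rpath y) \<subseteq> V"
  using gpath_set rpath r_V by simp

lemma tree_le_iff: "tree_le E r x y \<longleftrightarrow> y \<in> V \<and> x \<in> set (rpath y)"
proof
  assume "tree_le E r x y"
  then obtain xs where xs: "gpath E xs" "hd xs = r" "last xs = y" "x \<in> set xs"
    unfolding tree_le_def by blast
  have "rpath y = xs" using rpath_eq xs(1-3) by simp
  moreover have "set xs \<subseteq> V" using gpath_set xs(1,2) r_V by simp
  moreover have "xs \<noteq> []" using xs(1) by (simp add: gpath_def)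
  ultimately show "y \<in> V \<and> x \<in> set (rpath y)" using xs(3,4) last_in_set by (metis subsetD)
next
  assume "y \<in> V \<and> x \<in> set (rpath y)"
  then show "tree_le E r x y" unfolding tree_le_def using rpath by blast
qed

lemma gpath_take: "gpath E xs \<Longrightarrow> 0 < k \<Longrightarrow> gpath E (take k xs)"
  by (simp add: gpath_walk walk_take)

lemma rpath_prefix:
  assumes y: "y \<in> V" and i: "i < length (rpath y)"
  shows "rpath (rpath y ! i) = take (Suc i) (rpath y)"
proof (rule rpath_eq)
  show "gpath E (take (Suc i) (rpath y))" using gpath_take rpath(1)[OF y] by simp
  show "hd (take (Suc i) (rpath y)) = r" using rpath(2)[OF y] by simp
  show "last (take (Suc i) (rpath y)) = rpath y ! i" using i by (simp add: take_Suc_conv_app_nth)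
qed

lemma tree_le_V: "tree_le E r x y \<Longrightarrow> x \<in> V \<and> y \<in> V"
  using tree_le_iff rpath_V by blast

lemma tree_le_refl: "y \<in> V \<Longrightarrow> tree_le E r y y"
  using tree_le_iff rpath(3) rpath_ne by (metis last_in_set)

lemma tree_le_root: "y \<in> V \<Longrightarrow> tree_le E r r y"
  using tree_le_iff rpath(2) rpath_ne by (metis hd_in_set)

lemma tree_le_prefix:
  assumes "tree_le E r x y"
  obtains i where "i < length (rpath y)" "rpath y ! i = x" "rpath x = take (Suc i) (rpath y)"
proof -
  have y: "y \<in> V" and x: "x \<in> set (rpath y)" using assms tree_le_iff by auto
  then obtain i where i: "i < length (rpath y)" "rpath y ! i = x" by (metis in_set_conv_nth)
  then show ?thesis using that rpath_prefix[OF y i(1)] by simp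
qed

lemma tree_le_trans: "tree_le E r x y \<Longrightarrow> tree_le E r y z \<Longrightarrow> tree_le E r x z"
proof -
  assume xy: "tree_le E r x y" and yz: "tree_le E r y z"
  obtain i where i: "rpath y = take (Suc i) (rpath z)" using tree_le_prefix[OF yz] by metis
  have "x \<in> set (rpath y)" using xy tree_le_iff by simp
  then have "x \<in> set (rpath z)" using i by (metis in_set_takeD)
  then show ?thesis using tree_le_iff yz by simp
qed

lemma tree_le_len: assumes "tree_le E r x y" shows "length (rpath x) \<le> length (rpath y)"
proof -
  obtain i where i: "i < length (rpath y)" "rpath x = take (Suc i) (rpath y)"
    using tree_le_prefix[OF assms] by metis
  then show ?thesis by simp
qed

lemma tree_le_less_len: assumes "tree_le E r x y" "x \<noteq> y" shows "length (rpath x) < length (rpath y)"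
proof -
  obtain i where i: "i < length (rpath y)" "rpath y ! i = x" "rpath x = take (Suc i) (rpath y)"
    using tree_le_prefix[OF assms(1)] by metis
  have y: "y \<in> V" using assms(1) tree_le_V by simp
  have "Suc i \<noteq> length (rpath y)"
  proof
    assume "Suc i = length (rpath y)"
    then have "rpath y ! i = last (rpath y)" using rpath_ne[OF y] by (simp add: last_conv_nth del: One_nat_def) (metis diff_Suc_1)
    then show False using i(2) assms(2) rpath(3)[OF y] by simp
  qed
  then show ?thesis using i by simp
qed

lemma tree_le_antisym: "tree_le E r x y \<Longrightarrow> tree_le E r y x \<Longrightarrow> x = y"
  using tree_le_less_len tree_le_len by (meson leD)

lemma tree_le_total:
  assumes "tree_le E r x z" "tree_le E r y z" shows "tree_le E r x y \<or> tree_le E r y x"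
proof -
  obtain i where i: "i < length (rpath z)" "rpath z ! i = x" "rpath x = take (Suc i) (rpath z)"
    using tree_le_prefix[OF assms(1)] by metis
  obtain j where j: "j < length (rpath z)" "rpath z ! j = y" "rpath y = take (Suc j) (rpath z)"
    using tree_le_prefix[OF assms(2)] by metis
  have xV: "x \<in> V" "y \<in> V" using assms tree_le_V by auto
  show ?thesis
  proof (cases "i \<le> j")
    case True
    have l: "i < length (rpath y)" using j(3) i(1) True by simp
    have "rpath y ! i = x" using j(3) i(2) True by simp
    then have "x \<in> set (rpath y)" using nth_mem[OF l] by simp
    then show ?thesis using tree_le_iff xV by simp
  next
    case False
    have l: "j < length (rpath x)" using i(3) j(1) False by simp
    have "rpath x ! j = y" using i(3) j(2) False by simp
    then have "y \<in> set (rpath x)" using nth_mem[OF l] by simp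
    then show ?thesis using tree_le_iff xV by simp
  qed
qed

lemma edge_le: assumes e: "(x, y) \<in> E" shows "tree_le E r x y \<or> tree_le E r y x"
proof (cases "y \<in> set (rpath x)")
  case True
  have "x \<in> V" using e E_V by auto
  then show ?thesis using True tree_le_iff by simp
next
  case False
  have xV: "x \<in> V" and yV: "y \<in> V" using e E_V by auto
  have g: "gpath E (rpath x @ [y])"
  proof -
    have "walk E (rpath x @ [y])"
      using walk_append[of "rpath x" "[y]" E] rpath[OF xV] rpath_ne[OF xV] e
      by (simp add: gpath_walk walk_def)
    moreover have "distinct (rpath x @ [y])" using False rpath(1)[OF xV] by (simp add: gpath_walk)
    ultimately show ?thesis by (simp add: gpath_walk)
  qed
  have "rpath y = rpath x @ [y]" using rpath_eq[OF g] rpath(2)[OF xV] rpath_ne[OF xV] by simp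
  then have "x \<in> set (rpath y)" using rpath(3)[OF xV] rpath_ne[OF xV] last_in_set by fastforce
  then show ?thesis using tree_le_iff yV by simp
qed

definition tdown :: "'a \<Rightarrow> 'a set" where "tdown t = {x. tree_le E r x t \<and> x \<noteq> t}"

lemma tdown_eq: "tree_down E r t = tdown t" unfolding tree_down_def tdown_def by simp

lemma set_rpath_le: "t \<in> V \<Longrightarrow> set (rpath t) = {x. tree_le E r x t}"
  using tree_le_iff by auto

lemma finite_le: "finite {x. tree_le E r x t}"
proof (cases "t \<in> V")
  case True then show ?thesis using set_rpath_le by (metis List.finite_set)
next
  case False
  then have "{x. tree_le E r x t} = {}" using tree_le_V by blast
  then show ?thesis by simp
qed

lemma child:
  assumes "tree_le E r t u" "t \<noteq> u"
  obtains c where "(t, c) \<in> E" "tree_le E r c u" "rpath c = rpath t @ [c]"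
    "{x. tree_le E r x c \<and> x \<noteq> c} = {x. tree_le E r x t}"
proof -
  obtain i where i: "i < length (rpath u)" "rpath u ! i = t" "rpath t = take (Suc i) (rpath u)"
    using tree_le_prefix[OF assms(1)] by metis
  have uV: "u \<in> V" and tV: "t \<in> V" using assms(1) tree_le_V by auto
  have "length (rpath t) < length (rpath u)" using tree_le_less_len assms by simp
  then have si: "Suc i < length (rpath u)" using i(3) by simp
  define c where "c = rpath u ! Suc i"
  have rc: "rpath c = rpath t @ [c]"
    unfolding c_def using rpath_prefix[OF uV si] i(3) by (simp add: take_Suc_conv_app_nth[OF si])
  have e: "(t, c) \<in> E" unfolding c_def using walk_nth[OF _ si] rpath(1)[OF uV] i(2) by (simp add: gpath_walk)
  have cu: "tree_le E r c u" using tree_le_iff uV si unfolding c_def by (simp add: nth_mem)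
  have cV: "c \<in> V" using e E_V by auto
  have dc: "distinct (rpath c)" using rpath(1)[OF cV] by (simp add: gpath_walk)
  have "{x. tree_le E r x c \<and> x \<noteq> c} = set (rpath c) - {c}" using set_rpath_le[OF cV] by auto
  also have "\<dots> = set (rpath t)" using rc dc by auto
  also have "\<dots> = {x. tree_le E r x t}" using set_rpath_le[OF tV] .
  finally show ?thesis using that e cu rc by simp
qed

end

definition wreach :: "('a \<times> 'a) set \<Rightarrow> 'a set \<Rightarrow> 'a \<Rightarrow> 'a \<Rightarrow> bool" where
  "wreach E X x y \<longleftrightarrow> (\<exists>xs. walk E xs \<and> hd xs = x \<and> last xs = y \<and> set xs \<inter> X = {})"

lemma greach_wreach: "greach E X x y \<Longrightarrow> wreach E X x y"
  unfolding greach_def wreach_def gpath_walk by blast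

lemma wreach_sym: assumes "sym E" "wreach E X x y" shows "wreach E X y x"
proof -
  obtain xs where xs: "walk E xs" "hd xs = x" "last xs = y" "set xs \<inter> X = {}"
    using assms(2) unfolding wreach_def by blast
  have "walk E (rev xs)" using xs(1) walk_rev[OF assms(1)] by simp
  moreover have "xs \<noteq> []" using xs(1) by (simp add: walk_def)
  ultimately show ?thesis unfolding wreach_def using xs
    by (intro exI[where x="rev xs"]) (simp add: hd_rev last_rev)
qed

lemma wreach_trans: assumes "wreach E X x y" "wreach E X y z" shows "wreach E X x z"
proof -
  obtain xs where xs: "walk E xs" "hd xs = x" "last xs = y" "set xs \<inter> X = {}"
    using assms(1) unfolding wreach_def by blast
  obtain ys where ys: "walk E ys" "hd ys = y" "last ys = z" "set ys \<inter> X = {}"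
    using assms(2) unfolding wreach_def by blast
  have xne: "xs \<noteq> []" and yne: "ys \<noteq> []" using xs(1) ys(1) by (simp_all add: walk_def)
  then obtain ys' where ys': "ys = y # ys'" using ys(2) by (cases ys) auto
  show ?thesis
  proof (cases "ys' = []")
    case True
    then show ?thesis using xs ys ys' unfolding wreach_def by auto
  next
    case False
    have "(y, hd ys') \<in> E" "walk E ys'" using ys(1) ys' False by (simp_all add: walk_Cons)
    then have "walk E (xs @ ys')" using walk_append[OF xne False] xs(1,3) by simp
    moreover have "hd (xs @ ys') = x" "last (xs @ ys') = z" using xne False xs ys ys' by auto
    moreover have "set (xs @ ys') \<inter> X = {}" using xs(4) ys(4) ys' by auto
    ultimately show ?thesis unfolding wreach_def by blast
  qed
qed

lemma walk_to_path:
  "walk E xs \<Longrightarrow> \<exists>ys. gpath E ys \<and> hd ys = hd xs \<and> last ys = last xs \<and> set ys \<subseteq> set xs"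
proof (induction "length xs" arbitrary: xs rule: less_induct)
  case less
  show ?case
  proof (cases "distinct xs")
    case True then show ?thesis using less.prems by (intro exI[where x=xs]) (simp add: gpath_walk)
  next
    case False
    then obtain a y b c where xs: "xs = a @ [y] @ b @ [y] @ c" using not_distinct_decomp by blast
    let ?R = "\<lambda>x y. (x, y) \<in> E"
    have s: "successively ?R xs" using less.prems by (simp add: walk_def)
    have s1: "successively ?R (a @ [y])"
      using s unfolding xs successively_append_iff by simp
    have s2: "successively ?R (y # c)"
      using s unfolding xs successively_append_iff by (simp add: successively_Cons)
    have s3: "successively ?R (a @ [y] @ c)"
      using s1 s2 by (auto simp: successively_append_iff successively_Cons)
    have w: "walk E (a @ [y] @ c)" using s3 by (simp add: walk_def)
    have "length (a @ [y] @ c) < length xs" unfolding xs by simp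
    from less.hyps[OF this w] obtain ys where ys: "gpath E ys" "hd ys = hd (a @ [y] @ c)"
      "last ys = last (a @ [y] @ c)" "set ys \<subseteq> set (a @ [y] @ c)" by blast
    have "hd (a @ [y] @ c) = hd xs" unfolding xs by (cases a) auto
    moreover have "last (a @ [y] @ c) = last xs" unfolding xs by (cases c rule: rev_cases) auto
    moreover have "set (a @ [y] @ c) \<subseteq> set xs" unfolding xs by auto
    ultimately show ?thesis using ys by (intro exI[where x=ys]) auto
  qed
qed

lemma wreach_greach: "wreach E X x y \<Longrightarrow> greach E X x y"
proof -
  assume "wreach E X x y"
  then obtain xs where xs: "walk E xs" "hd xs = x" "last xs = y" "set xs \<inter> X = {}"
    unfolding wreach_def by blast
  obtain ys where "gpath E ys" "hd ys = hd xs" "last ys = last xs" "set ys \<subseteq> set xs"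
    using walk_to_path[OF xs(1)] by blast
  then show ?thesis unfolding greach_def using xs by blast
qed

lemma walk_invariant:
  assumes "walk E xs" "set xs \<inter> X = {}" "P (hd xs)"
    "\<And>x y. P x \<Longrightarrow> (x, y) \<in> E \<Longrightarrow> y \<notin> X \<Longrightarrow> P y"
  shows "P (last xs)"
  using assms(1-3)
proof (induction xs)
  case Nil then show ?case by (simp add: walk_def)
next
  case (Cons a xs)
  show ?case
  proof (cases "xs = []")
    case True then show ?thesis using Cons.prems by simp
  next
    case False
    have e: "(a, hd xs) \<in> E" and w: "walk E xs" using Cons.prems(1) False by (simp_all add: walk_Cons)
    have "hd xs \<notin> X" using Cons.prems(2) False by (metis disjoint_iff hd_in_set list.set_intros(2))
    then have "P (hd xs)" using assms(4)[OF _ e] Cons.prems(3) by simp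
    moreover have "set xs \<inter> X = {}" using Cons.prems(2) by auto
    ultimately have "P (last xs)" using Cons.IH w by simp
    then show ?thesis using False by simp
  qed
qed

lemma walk_seg:
  assumes "\<And>k. (f k, f (Suc k)) \<in> E" "i \<le> j"
  shows "walk E (map f [i..<Suc j])"
  unfolding walk_def successively_conv_nth
proof (intro conjI allI impI)
  show "map f [i..<Suc j] \<noteq> []" using assms(2) by (simp del: upt_Suc)
  fix l assume "Suc l < length (map f [i..<Suc j])"
  then have l: "Suc l < Suc j - i" by (simp del: upt_Suc)
  have "map f [i..<Suc j] ! l = f (i + l)" "map f [i..<Suc j] ! Suc l = f (Suc (i + l))"
    using l by (simp_all del: upt_Suc add: nth_upt)
  then show "(map f [i..<Suc j] ! l, map f [i..<Suc j] ! Suc l) \<in> E" using assms(1) by simp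
qed

lemma wreach_seg:
  assumes "\<And>k. (f k, f (Suc k)) \<in> E" "i \<le> j" "\<And>k. i \<le> k \<Longrightarrow> k \<le> j \<Longrightarrow> f k \<notin> X"
  shows "wreach E X (f i) (f j)"
  unfolding wreach_def
proof (intro exI conjI)
  show "walk E (map f [i..<Suc j])" using walk_seg assms(1,2) by blast
  have "[i..<Suc j] = i # [Suc i..<Suc j]" using assms(2) by (simp add: upt_conv_Cons del: upt_Suc)
  then show "hd (map f [i..<Suc j]) = f i" by simp
  show "last (map f [i..<Suc j]) = f j" using assms(2) by simp
  show "set (map f [i..<Suc j]) \<inter> X = {}" using assms(3) by auto
qed

lemma gray_tail: assumes "gray V E f" "finite X" shows "\<exists>n. \<forall>k\<ge>n. f k \<notin> X"
proof -
  have "inj f" using assms(1) unfolding gray_def by simp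
  then have "finite (f -` X)" using assms(2) by (simp add: finite_vimageI)
  then obtain n where "\<forall>k\<in>f -` X. k < n" using finite_nat_set_iff_bounded by blast
  then show ?thesis by (meson leD vimageI)
qed

lemma gray_edge: "gray V E f \<Longrightarrow> (f k, f (Suc k)) \<in> E" unfolding gray_def by simp
lemma gray_V: "gray V E f \<Longrightarrow> f k \<in> V" unfolding gray_def by simp
lemma gray_inj: "gray V E f \<Longrightarrow> inj f" unfolding gray_def by simp

lemma ray_equiv_refl: assumes "gray V E f" shows "ray_equiv V E f f"
  unfolding ray_equiv_def
proof (intro allI impI)
  fix X assume "finite X \<and> X \<subseteq> V"
  then obtain n where n: "\<forall>k\<ge>n. f k \<notin> X" using gray_tail[OF assms] by blast
  have "greach E X (f n) (f n)" unfolding greach_def using n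
    by (intro exI[where x="[f n]"]) (simp add: gpath_def)
  then show "\<exists>n m. (\<forall>k\<ge>n. f k \<notin> X) \<and> (\<forall>k\<ge>m. f k \<notin> X) \<and> greach E X (f n) (f m)"
    using n by blast
qed

lemma greach_sym: "sym E \<Longrightarrow> greach E X x y \<Longrightarrow> greach E X y x"
  using wreach_greach wreach_sym greach_wreach by metis

lemma ray_equiv_sym: assumes "sym E" "ray_equiv V E f g" shows "ray_equiv V E g f"
  unfolding ray_equiv_def
proof (intro allI impI)
  fix X assume X: "finite X \<and> X \<subseteq> V"
  then obtain n m where "(\<forall>k\<ge>n. f k \<notin> X)" "(\<forall>k\<ge>m. g k \<notin> X)" "greach E X (f n) (g m)"
    using assms(2) unfolding ray_equiv_def by meson
  then show "\<exists>n m. (\<forall>k\<ge>n. g k \<notin> X) \<and> (\<forall>k\<ge>m. f k \<notin> X) \<and> greach E X (g n) (f m)"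
    using greach_sym[OF assms(1)] by blast
qed

lemma ray_equiv_trans:
  assumes s: "sym E" and g: "gray V E g" and fg: "ray_equiv V E f g" and gh: "ray_equiv V E g h"
  shows "ray_equiv V E f h"
  unfolding ray_equiv_def
proof (intro allI impI)
  fix X assume X: "finite X \<and> X \<subseteq> V"
  obtain n1 m1 where 1: "\<forall>k\<ge>n1. f k \<notin> X" "\<forall>k\<ge>m1. g k \<notin> X" "greach E X (f n1) (g m1)"
    using fg X unfolding ray_equiv_def by meson
  obtain m2 k2 where 2: "\<forall>k\<ge>m2. g k \<notin> X" "\<forall>k\<ge>k2. h k \<notin> X" "greach E X (g m2) (h k2)"
    using gh X unfolding ray_equiv_def by meson
  have mid: "wreach E X (g m1) (g m2)"
  proof (cases "m1 \<le> m2")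
    case True
    show ?thesis by (rule wreach_seg[where f=g, OF gray_edge[OF g] True]) (use 1(2) in simp)
  next
    case False
    then have "m2 \<le> m1" by simp
    have "wreach E X (g m2) (g m1)" by (rule wreach_seg[where f=g, OF gray_edge[OF g] \<open>m2 \<le> m1\<close>]) (use 2(1) in simp)
    then show ?thesis using wreach_sym[OF s] by blast
  qed
  have "wreach E X (f n1) (h k2)"
    using wreach_trans[OF wreach_trans[OF greach_wreach[OF 1(3)] mid] greach_wreach[OF 2(3)]] .
  then have "greach E X (f n1) (h k2)" by (rule wreach_greach)
  then show "\<exists>n m. (\<forall>k\<ge>n. f k \<notin> X) \<and> (\<forall>k\<ge>m. h k \<notin> X) \<and> greach E X (f n) (h m)"
    using 1(1) 2(2) by blast
qed

definition gcls :: "'a set \<Rightarrow> ('a \<times> 'a) set \<Rightarrow> (nat \<Rightarrow> 'a) \<Rightarrow> (nat \<Rightarrow> 'a) set" where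
  "gcls V E f = {g. gray V E g \<and> ray_equiv V E f g}"

lemma gends_iff: "\<omega> \<in> gends V E \<longleftrightarrow> (\<exists>f. gray V E f \<and> \<omega> = gcls V E f)"
  unfolding gends_def gcls_def by blast

lemma gcls_self: "gray V E f \<Longrightarrow> f \<in> gcls V E f"
  unfolding gcls_def using ray_equiv_refl by blast

lemma gcls_eq: assumes "sym E" "gray V E a" "f \<in> gcls V E a" shows "gcls V E f = gcls V E a"
proof -
  have f: "gray V E f" "ray_equiv V E a f" using assms(3) unfolding gcls_def by auto
  show ?thesis unfolding gcls_def
    using ray_equiv_trans[OF assms(1) f(1) f(2)]
      ray_equiv_trans[OF assms(1) assms(2) ray_equiv_sym[OF assms(1) f(2)]] by blast
qed

context rtree
begin

lemma ray_rpath: assumes f: "gray V E f" "f 0 = r" shows "rpath (f n) = map f [0..<Suc n]"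
proof (rule rpath_eq)
  have "walk E (map f [0..<Suc n])" using walk_seg[where f=f, OF gray_edge[OF f(1)]] by simp
  moreover have "distinct (map f [0..<Suc n])" using gray_inj[OF f(1)]
    by (simp add: distinct_map inj_on_subset[of f UNIV] del: upt_Suc)
  ultimately show "gpath E (map f [0..<Suc n])" by (simp add: gpath_walk)
  have "[0..<Suc n] = 0 # [Suc 0..<Suc n]" by (simp add: upt_conv_Cons del: upt_Suc)
  then show "hd (map f [0..<Suc n]) = r" using f(2) by simp
  show "last (map f [0..<Suc n]) = f n" by simp
qed

lemma ray_le_iff: assumes f: "gray V E f" "f 0 = r" shows "tree_le E r x (f n) \<longleftrightarrow> x \<in> f ` {..n}"
proof -
  have "set (map f [0..<Suc n]) = f ` {..n}" by (auto simp del: upt_Suc simp: atLeast0_atMost_Suc)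
  then show ?thesis using tree_le_iff ray_rpath[OF f] gray_V[OF f(1)] by simp
qed

lemma ray_le_ray: assumes f: "gray V E f" "f 0 = r" shows "tree_le E r (f i) (f j) \<longleftrightarrow> i \<le> j"
proof
  assume "tree_le E r (f i) (f j)"
  then obtain k where "k \<le> j" "f i = f k" using ray_le_iff[OF f] by auto
  then show "i \<le> j" using gray_inj[OF f(1)] by (metis injD)
next
  assume "i \<le> j" then show "tree_le E r (f i) (f j)" using ray_le_iff[OF f] by auto
qed

lemma rays_meet:
  assumes f: "gray V E f" "f 0 = r" and g: "gray V E g" "g 0 = r" and eq: "f i = g j"
  shows "i = j" "\<And>l. l \<le> i \<Longrightarrow> f l = g l"
proof -
  have m: "map f [0..<Suc i] = map g [0..<Suc j]" using ray_rpath[OF f, of i] ray_rpath[OF g, of j] eq by simp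
  then have "length (map f [0..<Suc i]) = length (map g [0..<Suc j])" by simp
  then show ij: "i = j" by simp
  fix l assume l: "l \<le> i"
  have "\<forall>x\<in>set [0..<Suc i]. f x = g x" using m ij by (simp only: map_eq_conv)
  then show "f l = g l" using l by (simp del: upt_Suc)
qed

lemma root_ray_unique:
  assumes f: "gray V E f" "f 0 = r" and g: "gray V E g" "g 0 = r" and fg: "ray_equiv V E f g"
  shows "f = g"
proof (rule ccontr)
  assume "f \<noteq> g"
  then have ex: "\<exists>n. f n \<noteq> g n" by auto
  define n where "n = (LEAST n. f n \<noteq> g n)"
  have fn: "f n \<noteq> g n" unfolding n_def using LeastI_ex[OF ex] .
  have below: "\<And>l. l < n \<Longrightarrow> f l = g l" unfolding n_def using not_less_Least by blast
  define X where "X = f ` {..<n}"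
  have X: "finite X \<and> X \<subseteq> V" unfolding X_def using gray_V[OF f(1)] by auto
  obtain k m where km: "\<forall>i\<ge>k. f i \<notin> X" "\<forall>i\<ge>m. g i \<notin> X" "greach E X (f k) (g m)"
    using fg X unfolding ray_equiv_def by meson
  have "k \<ge> n"
  proof (rule ccontr)
    assume "\<not> n \<le> k" then have "f k \<in> X" unfolding X_def by simp
    then show False using km(1) by simp
  qed
  then have P0: "tree_le E r (f n) (f k)" using ray_le_ray[OF f] by simp
  obtain xs where xs: "gpath E xs" "hd xs = f k" "last xs = g m" "set xs \<inter> X = {}"
    using km(3) unfolding greach_def by blast
  have step: "tree_le E r (f n) y" if "tree_le E r (f n) x" "(x, y) \<in> E" "y \<notin> X" for x y
  proof (cases "tree_le E r x y")
    case True then show ?thesis using tree_le_trans that(1) by blast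
  next
    case False
    then have yx: "tree_le E r y x" using edge_le[OF that(2)] by blast
    show ?thesis
    proof (cases "tree_le E r (f n) y")
      case True then show ?thesis .
    next
      case False
      then have "tree_le E r y (f n)" using tree_le_total[OF yx that(1)] by blast
      then obtain l where l: "l \<le> n" "y = f l" using ray_le_iff[OF f] by auto
      have "l = n"
      proof (rule ccontr)
        assume "l \<noteq> n" then have "y \<in> X" unfolding X_def using l by simp
        then show False using that(3) by simp
      qed
      then show ?thesis using l tree_le_refl gray_V[OF f(1)] by simp
    qed
  qed
  have "tree_le E r (f n) (last xs)"
    using walk_invariant[of E xs X "\<lambda>x. tree_le E r (f n) x"] xs step P0 by (simp add: gpath_walk)
  then have "tree_le E r (f n) (g m)" using xs(3) by simp
  then obtain j where j: "j \<le> m" "f n = g j" using ray_le_iff[OF g] by auto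
  then have "n = j" using rays_meet[OF f g] by simp
  then show False using fn j by simp
qed

lemma root_ray_exists:
  assumes a: "gray V E a" shows "\<exists>f. gray V E f \<and> f 0 = r \<and> ray_equiv V E a f"
proof -
  have a0: "a 0 \<in> V" using gray_V[OF a] .
  define P0 where "P0 = rpath (a 0)"
  define A where "A = {k. a k \<in> set P0}"
  have "finite A" unfolding A_def using finite_vimageI[OF List.finite_set gray_inj[OF a]]
    by (simp add: vimage_def)
  moreover have "0 \<in> A" unfolding A_def P0_def using rpath(3)[OF a0] rpath_ne[OF a0] last_in_set by fastforce
  ultimately have kA: "Max A \<in> A" and kmax: "\<And>j. j \<in> A \<Longrightarrow> j \<le> Max A"
    using Max_in Max_ge by blast+
  define k where "k = Max A"
  have akV: "a k \<in> V" using gray_V[OF a] .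
  define Q where "Q = rpath (a k)"
  have "tree_le E r (a k) (a 0)" using kA tree_le_iff a0 unfolding A_def P0_def k_def by simp
  then have QP: "set Q \<subseteq> set P0" unfolding Q_def P0_def
    using tree_le_trans set_rpath_le[OF akV] set_rpath_le[OF a0] by auto
  define d where "d = length Q"
  have d1: "d \<ge> 1" unfolding d_def Q_def using rpath_ne[OF akV] by (simp add: Suc_le_eq)
  have Qlast: "Q ! (d - 1) = a k" unfolding d_def Q_def using rpath(3)[OF akV] rpath_ne[OF akV]
    by (simp add: last_conv_nth)
  have gQ: "gpath E Q" unfolding Q_def using rpath(1)[OF akV] .
  have QV: "set Q \<subseteq> V" unfolding Q_def using rpath_V[OF akV] .
  define f where "f j = (if j < d then Q ! j else a (k + (j - d) + 1))" for j
  have notP: "a (k + i + 1) \<notin> set P0" for i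
  proof
    assume "a (k + i + 1) \<in> set P0"
    then have "k + i + 1 \<in> A" unfolding A_def by simp
    then show False using kmax unfolding k_def by fastforce
  qed
  have f0: "f 0 = r" unfolding f_def using d1 rpath(2)[OF akV] rpath_ne[OF akV] unfolding Q_def
    by (simp add: hd_conv_nth)
  have fV: "f j \<in> V" for j unfolding f_def using QV gray_V[OF a] d_def by (auto simp: nth_mem subset_iff)
  have fE: "(f j, f (Suc j)) \<in> E" for j
  proof (cases "Suc j < d")
    case True
    have "walk E Q" using gQ by (simp add: gpath_walk)
    from walk_nth[OF this] True have "(Q ! j, Q ! Suc j) \<in> E" unfolding d_def by simp
    then show ?thesis unfolding f_def using True by simp
  next
    case False
    show ?thesis
    proof (cases "Suc j = d")
      case True
      then have "f j = a k" "f (Suc j) = a (k + 1)" unfolding f_def using Qlast by auto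
      then show ?thesis using gray_edge[OF a, of k] by simp
    next
      case False
      then have jd: "d \<le> j" using \<open>\<not> Suc j < d\<close> by simp
      then have "f j = a (k + (j - d) + 1)" "f (Suc j) = a (Suc (k + (j - d) + 1))"
        unfolding f_def by (auto simp: Suc_diff_le)
      then show ?thesis using gray_edge[OF a] by simp
    qed
  qed
  have finj: "inj f"
  proof (rule injI)
    fix i j assume eq: "f i = f j"
    have dQ: "distinct Q" using gQ by (simp add: gpath_walk)
    consider "i < d" "j < d" | "i < d" "\<not> j < d" | "\<not> i < d" "j < d" | "\<not> i < d" "\<not> j < d" by blast
    then show "i = j"
    proof cases
      case 1 then show ?thesis using eq dQ d_def unfolding f_def by (simp add: nth_eq_iff_index_eq)
    next
      case 2
      then have "a (k + (j - d) + 1) \<in> set Q" using eq unfolding f_def d_def by (metis nth_mem)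
      then show ?thesis using QP notP by blast
    next
      case 3
      then have "a (k + (i - d) + 1) \<in> set Q" using eq unfolding f_def d_def by (metis nth_mem)
      then show ?thesis using QP notP by blast
    next
      case 4
      then have "k + (i - d) + 1 = k + (j - d) + 1" using eq gray_inj[OF a] unfolding f_def by (simp add: inj_eq)
      then show ?thesis using 4 by simp
    qed
  qed
  have gf: "gray V E f" unfolding gray_def using finj fV fE by simp
  have "ray_equiv V E a f"
    unfolding ray_equiv_def
  proof (intro allI impI)
    fix X assume X: "finite X \<and> X \<subseteq> V"
    then obtain b where b: "\<forall>i\<ge>b. a i \<notin> X" using gray_tail[OF a] by blast
    define n where "n = max b (k + 1)"
    define m where "m = n - (k + 1) + d"
    have nk: "n \<ge> k + 1" unfolding n_def by simp
    have md: "\<not> m < d" "k + (m - d) + 1 = n" unfolding m_def using nk by auto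
    have fm: "f m = a n" unfolding f_def using md by simp
    have t1: "\<forall>i\<ge>n. a i \<notin> X" using b unfolding n_def by simp
    have t2: "\<forall>i\<ge>m. f i \<notin> X"
    proof (intro allI impI)
      fix i assume "i \<ge> m"
      then have "\<not> i < d" "k + (i - d) + 1 \<ge> b" unfolding m_def n_def by auto
      then have "f i = a (k + (i - d) + 1)" "k + (i - d) + 1 \<ge> b" unfolding f_def by auto
      then show "f i \<notin> X" using b by simp
    qed
    have "greach E X (a n) (f m)" unfolding greach_def using fm t1
      by (intro exI[where x="[a n]"]) (simp add: gpath_def)
    then show "\<exists>n m. (\<forall>k\<ge>n. a k \<notin> X) \<and> (\<forall>k\<ge>m. f k \<notin> X) \<and> greach E X (a n) (f m)"
      using t1 t2 by blast
  qed
  then show ?thesis using gf f0 by blast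
qed

lemma root_ray_props:
  assumes w: "\<omega> \<in> gends V E"
  shows "root_ray r \<omega> \<in> \<omega>" "gray V E (root_ray r \<omega>)" "root_ray r \<omega> 0 = r"
    "\<And>g. g \<in> \<omega> \<Longrightarrow> g 0 = r \<Longrightarrow> g = root_ray r \<omega>"
proof -
  obtain a where a: "gray V E a" "\<omega> = gcls V E a" using w gends_iff by blast
  obtain f where f: "gray V E f" "f 0 = r" "ray_equiv V E a f" using root_ray_exists[OF a(1)] by blast
  have fw: "f \<in> \<omega>" using f a unfolding gcls_def by simp
  have uniq: "g = f" if "g \<in> \<omega>" "g 0 = r" for g
  proof -
    have g: "gray V E g" "ray_equiv V E a g" using that a unfolding gcls_def by auto
    have "ray_equiv V E f g" using ray_equiv_trans[OF symE a(1) ray_equiv_sym[OF symE f(3)] g(2)] .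
    then show ?thesis using root_ray_unique[OF f(1,2) g(1) that(2)] by simp
  qed
  have rr: "root_ray r \<omega> = f" unfolding root_ray_def
  proof (rule the_equality)
    show "f \<in> \<omega> \<and> f 0 = r" using fw f(2) by simp
    fix g assume "g \<in> \<omega> \<and> g 0 = r" then show "g = f" using uniq[of g] by simp
  qed
  show "root_ray r \<omega> \<in> \<omega>" "gray V E (root_ray r \<omega>)" "root_ray r \<omega> 0 = r"
    unfolding rr using fw f by simp_all
  show "\<And>g. g \<in> \<omega> \<Longrightarrow> g 0 = r \<Longrightarrow> g = root_ray r \<omega>" unfolding rr by (rule uniq)
qed

end


lemma gray_img_inf: assumes "gray V E f" shows "infinite (f ` {n..})"
proof
  assume "finite (f ` {n..})"
  moreover have "inj_on f {n..}" using gray_inj[OF assms] by (simp add: inj_on_subset[of f UNIV])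
  ultimately have "finite {n::nat..}" by (rule finite_imageD)
  then show False using infinite_Ici by blast
qed

locale ntree = rtree V E r for V :: "'a set" and E and r +
  fixes S :: "'a set" and Fs :: "'a set set"
  assumes conn: "connectoid S Fs" and nt: "normal_tree S Fs V E r"
begin

lemma wnt: "weak_normal_tree S Fs V E r" using nt unfolding normal_tree_def by (elim conjE)

lemma VS: "V \<subseteq> S" using wnt unfolding weak_normal_tree_def by (elim conjE)

lemma N1_0: "\<forall>C. cconnected S Fs C \<longrightarrow> (\<forall>u\<in>C \<inter> V. \<forall>v\<in>C \<inter> V.
         \<not> tree_le E r u v \<and> \<not> tree_le E r v u \<longrightarrow>
         (\<exists>w\<in>C. tree_le E r w u \<and> tree_le E r w v))"
  using wnt unfolding weak_normal_tree_def by (elim conjE)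

lemma N1: assumes "cconnected S Fs C" "u \<in> C" "u \<in> V" "v \<in> C" "v \<in> V"
  "\<not> tree_le E r u v" "\<not> tree_le E r v u"
  obtains w where "w \<in> C" "tree_le E r w u" "tree_le E r w v"
proof -
  have "\<exists>w\<in>C. tree_le E r w u \<and> tree_le E r w v" using N1_0 assms by simp
  then show ?thesis using that by blast
qed

lemma N2_0: "\<forall>u\<in>V. \<forall>v\<in>V. tree_le E r u v \<longrightarrow>
         (\<exists>C. cconnected S Fs C \<and> u \<in> C \<and> v \<in> C \<and> C \<inter> tree_down E r u = {})"
  using wnt unfolding weak_normal_tree_def by (elim conjE)

lemma N2: assumes "tree_le E r u v"
  obtains C where "cconnected S Fs C" "u \<in> C" "v \<in> C" "C \<inter> tdown u = {}"
proof -
  have "u \<in> V" "v \<in> V" using tree_le_V assms by auto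
  then have "\<exists>C. cconnected S Fs C \<and> u \<in> C \<and> v \<in> C \<and> C \<inter> tree_down E r u = {}"
    using N2_0 assms by simp
  then show ?thesis using that tdown_eq by metis
qed

lemma N3_0: "\<forall>f. gray V E f \<and> f 0 = r \<longrightarrow> (\<exists>N. necklace S Fs N \<and> finite (range f - N))"
  using nt unfolding normal_tree_def by (elim conjE)

lemma ray_converges:
  assumes f: "gray V E f" "f 0 = r"
  shows "\<exists>N. necklace S Fs N \<and> converges S Fs (range f) (ncls S Fs N)"
proof -
  obtain N where N: "necklace S Fs N" "finite (range f - N)" using N3_0 f by blast
  have "infinite (range f)" using gray_img_inf[OF f(1), of 0] by simp
  then show ?thesis using converges_neck[OF conn N(1) _ N(2)] N(1) by blast
qed

lemma conv_unique_ex: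
  assumes w: "\<omega> \<in> gends V E"
  shows "\<exists>!\<nu>. \<nu> \<in> cends S Fs \<and> converges S Fs (range (root_ray r \<omega>)) \<nu>"
proof -
  obtain N where N: "necklace S Fs N" "converges S Fs (range (root_ray r \<omega>)) (ncls S Fs N)"
    using ray_converges[OF root_ray_props(2,3)[OF w]] by blast
  have "ncls S Fs N \<in> cends S Fs" using N(1) cends_iff by blast
  then show ?thesis using N(2) converges_unique[OF conn] by blast
qed

definition eta :: "(nat \<Rightarrow> 'a) set \<Rightarrow> 'a set set" where
  "eta \<omega> = (THE \<nu>. \<nu> \<in> cends S Fs \<and> converges S Fs (range (root_ray r \<omega>)) \<nu>)"

lemma eta: assumes w: "\<omega> \<in> gends V E"
  shows "eta \<omega> \<in> cends S Fs" "converges S Fs (range (root_ray r \<omega>)) (eta \<omega>)"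
  using theI'[OF conv_unique_ex[OF w]] unfolding eta_def by simp_all

lemma eta_eq: assumes w: "\<omega> \<in> gends V E" and "\<nu> \<in> cends S Fs"
  "converges S Fs (range (root_ray r \<omega>)) \<nu>" shows "eta \<omega> = \<nu>"
  using conv_unique_ex[OF w] eta[OF w] assms(2,3) by blast

lemma inf_meets: assumes "infinite A" "finite (A - K)" shows "\<exists>x\<in>A. x \<in> K"
proof (rule ccontr)
  assume "\<not> (\<exists>x\<in>A. x \<in> K)"
  then have "A - K = A" by blast
  then show False using assms by simp
qed

lemma converges_closure:
  assumes nu: "\<nu> \<in> cends S Fs" and c: "converges S Fs Y \<nu>" and Y: "Y \<subseteq> V"
  shows "in_closure S Fs V \<nu>"
  unfolding in_closure_def
proof (intro allI impI)
  fix X assume X: "finite X \<and> X \<subseteq> S"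
  then have "infinite Y" "finite (Y - endK S Fs X \<nu>)" using c unfolding converges_def by auto
  then obtain y where "y \<in> Y" "y \<in> endK S Fs X \<nu>" using inf_meets by blast
  then show "endK S Fs X \<nu> \<inter> V \<noteq> {}" using Y by blast
qed

lemma eta_closure: assumes w: "\<omega> \<in> gends V E" shows "in_closure S Fs V (eta \<omega>)"
proof -
  have "range (root_ray r \<omega>) \<subseteq> V" using gray_V[OF root_ray_props(2)[OF w]] by blast
  then show ?thesis by (rule converges_closure[OF eta(1)[OF w] eta(2)[OF w]])
qed

lemma eta_inj:
  assumes w: "\<omega> \<in> gends V E" and w': "\<omega>' \<in> gends V E" and eq: "eta \<omega> = eta \<omega>'"
  shows "\<omega> = \<omega>'"
proof -
  define f where "f = root_ray r \<omega>"
  define g where "g = root_ray r \<omega>'"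
  have f: "gray V E f" "f 0 = r" "f \<in> \<omega>" unfolding f_def using root_ray_props(1-3)[OF w] by auto
  have g: "gray V E g" "g 0 = r" "g \<in> \<omega>'" unfolding g_def using root_ray_props(1-3)[OF w'] by auto
  show ?thesis
  proof (cases "f = g")
    case True
    obtain a where a: "gray V E a" "\<omega> = gcls V E a" using w gends_iff by blast
    obtain b where b: "gray V E b" "\<omega>' = gcls V E b" using w' gends_iff by blast
    have "gcls V E f = \<omega>" using gcls_eq[OF symE a(1)] f(3) a(2) by simp
    moreover have "gcls V E g = \<omega>'" using gcls_eq[OF symE b(1)] g(3) b(2) by simp
    ultimately show ?thesis using True by simp
  next
    case False
    then have ex: "\<exists>n. f n \<noteq> g n" by auto
    define n where "n = (LEAST n. f n \<noteq> g n)"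
    have fn: "f n \<noteq> g n" unfolding n_def using LeastI_ex[OF ex] .
    define X where "X = f ` {..<n}"
    have X: "finite X" "X \<subseteq> S" unfolding X_def using gray_V[OF f(1)] VS by auto
    define \<nu> where "\<nu> = eta \<omega>"
    have nu: "\<nu> \<in> cends S Fs" unfolding \<nu>_def using eta(1)[OF w] .
    have cf: "converges S Fs (range f) \<nu>" unfolding \<nu>_def f_def using eta(2)[OF w] .
    have cg: "converges S Fs (range g) \<nu>" unfolding \<nu>_def g_def eq using eta(2)[OF w'] .
    define K where "K = endK S Fs X \<nu>"
    have K: "K \<in> ccomponents S Fs (S - X)" unfolding K_def using endK_comp[OF conn nu X] .
    have "finite (f ` {n..} - K)"
    proof -
      have "finite (range f - K)" using cf X unfolding converges_def K_def by blast
      then show ?thesis by (rule finite_subset[rotated]) auto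
    qed
    then obtain x1 where "x1 \<in> f ` {n..}" "x1 \<in> K" using inf_meets gray_img_inf[OF f(1)] by blast
    then obtain k1 where k1: "k1 \<ge> n" "f k1 \<in> K" by auto
    have "finite (g ` {n..} - K)"
    proof -
      have "finite (range g - K)" using cg X unfolding converges_def K_def by blast
      then show ?thesis by (rule finite_subset[rotated]) auto
    qed
    then obtain x2 where "x2 \<in> g ` {n..}" "x2 \<in> K" using inf_meets gray_img_inf[OF g(1)] by blast
    then obtain k2 where k2: "k2 \<ge> n" "g k2 \<in> K" by auto
    have meet: "i < n" if "f i = g j" for i j
    proof (rule ccontr)
      assume "\<not> i < n"
      then have "f n = g n" using rays_meet[OF f(1,2) g(1,2) that] by simp
      then show False using fn by simp
    qed
    have nc1: "\<not> tree_le E r (f k1) (g k2)"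
    proof
      assume "tree_le E r (f k1) (g k2)"
      then obtain j where "f k1 = g j" using ray_le_iff[OF g(1,2)] by auto
      then show False using meet k1 by fastforce
    qed
    have nc2: "\<not> tree_le E r (g k2) (f k1)"
    proof
      assume "tree_le E r (g k2) (f k1)"
      then obtain j where j: "j \<le> k1" "g k2 = f j" using ray_le_iff[OF f(1,2)] by auto
      then have "j = k2" using rays_meet[OF f(1,2) g(1,2)] by simp
      have "f j = g k2" using j by simp
      then have "j < n" by (rule meet)
      then show False using \<open>j = k2\<close> k2(1) by simp
    qed
    have Kc: "cconnected S Fs K" using ccomp_D[OF K] by blast
    obtain w where w: "w \<in> K" "tree_le E r w (f k1)" "tree_le E r w (g k2)"
      using N1[OF Kc k1(2) gray_V[OF f(1)] k2(2) gray_V[OF g(1)] nc1 nc2] by blast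
    obtain i where i: "i \<le> k1" "w = f i" using w(2) ray_le_iff[OF f(1,2)] by auto
    obtain j where j: "j \<le> k2" "w = g j" using w(3) ray_le_iff[OF g(1,2)] by auto
    have "f i = g j" using i j by simp
    then have "i < n" by (rule meet)
    then have "w \<in> X" unfolding X_def using i by simp
    moreover have "K \<subseteq> S - X" using ccomp_D[OF K] by blast
    ultimately show ?thesis using w(1) by blast
  qed
qed

lemma le_set_fin: "finite {x. tree_le E r x t}" "{x. tree_le E r x t} \<subseteq> S"
  using finite_le tree_le_V VS by auto

lemma tdown_fin: "finite (tdown t)" "tdown t \<subseteq> S"
proof -
  have "tdown t \<subseteq> {x. tree_le E r x t}" unfolding tdown_def by blast
  then show "finite (tdown t)" "tdown t \<subseteq> S" using le_set_fin finite_subset by blast+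
qed

lemma rpath_r: "rpath r = [r]"
  by (rule rpath_eq) (simp_all add: gpath_def)

lemma tdown_r: "tdown r = {}"
  unfolding tdown_def using tree_le_iff rpath_r by auto

definition I :: "'a set set \<Rightarrow> 'a \<Rightarrow> bool" where
  "I \<nu> t \<longleftrightarrow> t \<in> V \<and> t \<in> endK S Fs (tdown t) \<nu>"

lemma K1:
  assumes nu: "\<nu> \<in> cends S Fs" and It: "I \<nu> t" and u: "u \<in> endK S Fs (tdown t) \<nu>" "u \<in> V"
  shows "tree_le E r t u"
proof (rule ccontr)
  assume ntu: "\<not> tree_le E r t u"
  define K where "K = endK S Fs (tdown t) \<nu>"
  have K: "K \<in> ccomponents S Fs (S - tdown t)" unfolding K_def using endK_comp[OF conn nu tdown_fin] .
  have KS: "K \<subseteq> S - tdown t" and Kc: "cconnected S Fs K" using ccomp_D[OF K] by auto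
  have tK: "t \<in> K" "t \<in> V" using It unfolding I_def K_def by auto
  have uK: "u \<in> K" using u(1) unfolding K_def .
  show False
  proof (cases "tree_le E r u t")
    case True
    then have "u \<in> tdown t" using ntu tree_le_refl u(2) unfolding tdown_def by auto
    then show False using uK KS by blast
  next
    case False
    obtain w where w: "w \<in> K" "tree_le E r w t" "tree_le E r w u"
      using N1[OF Kc tK(1) tK(2) uK u(2) ntu False] by blast
    have "w \<notin> tdown t" using w(1) KS by blast
    then have "w = t" using w(2) unfolding tdown_def by simp
    then show False using w(3) ntu by simp
  qed
qed

lemma closure_pt:
  assumes cl: "in_closure S Fs V \<nu>" and X: "finite X" "X \<subseteq> S"
  obtains u where "u \<in> endK S Fs X \<nu>" "u \<in> V"
  using cl X unfolding in_closure_def by blast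

lemma I_base:
  assumes nu: "\<nu> \<in> cends S Fs" and cl: "in_closure S Fs V \<nu>"
  shows "I \<nu> r"
proof -
  have X: "finite ({}::'a set)" "{} \<subseteq> S" by auto
  obtain u where u: "u \<in> endK S Fs {} \<nu>" "u \<in> V" using closure_pt[OF cl X] by blast
  obtain C where C: "cconnected S Fs C" "r \<in> C" "u \<in> C" "C \<inter> tdown r = {}"
    using N2[OF tree_le_root[OF u(2)]] by blast
  have K: "endK S Fs {} \<nu> \<in> ccomponents S Fs (S - {})" using endK_comp[OF conn nu X] .
  have "C \<subseteq> S - {}" using cconnected_sub[OF C(1)] by simp
  then have "C \<subseteq> endK S Fs {} \<nu>" using ccomp_absorb[OF conn K _ C(1)] C(3) u(1) by blast
  then have "r \<in> endK S Fs {} \<nu>" using C(2) by blast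
  then show ?thesis unfolding I_def using r_V tdown_r by simp
qed

lemma I_step:
  assumes nu: "\<nu> \<in> cends S Fs" and cl: "in_closure S Fs V \<nu>" and It: "I \<nu> t"
  shows "\<exists>c. (t, c) \<in> E \<and> rpath c = rpath t @ [c] \<and> I \<nu> c"
proof -
  define X where "X = {x. tree_le E r x t}"
  have X: "finite X" "X \<subseteq> S" unfolding X_def using le_set_fin by auto
  obtain u where u: "u \<in> endK S Fs X \<nu>" "u \<in> V" using closure_pt[OF cl X] by blast
  have sub: "tdown t \<subseteq> X" unfolding X_def tdown_def by blast
  have "endK S Fs X \<nu> \<subseteq> endK S Fs (tdown t) \<nu>" using endK_mono[OF conn nu X sub] .
  then have tu: "tree_le E r t u" using K1[OF nu It] u by blast
  have K': "endK S Fs X \<nu> \<in> ccomponents S Fs (S - X)" using endK_comp[OF conn nu X] .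
  have "u \<notin> X" using u(1) ccomp_D[OF K'] by blast
  then have "t \<noteq> u" unfolding X_def using tu by auto
  then obtain c where c: "(t, c) \<in> E" "tree_le E r c u" "rpath c = rpath t @ [c]"
    "{x. tree_le E r x c \<and> x \<noteq> c} = {x. tree_le E r x t}" using child[OF tu] by metis
  have tdc: "tdown c = X" unfolding tdown_def X_def using c(4) .
  obtain C where C: "cconnected S Fs C" "c \<in> C" "u \<in> C" "C \<inter> tdown c = {}"
    using N2[OF c(2)] by blast
  have "C \<subseteq> S - X" using cconnected_sub[OF C(1)] C(4) tdc by blast
  then have "C \<subseteq> endK S Fs X \<nu>" using ccomp_absorb[OF conn K' _ C(1)] C(3) u(1) by blast
  then have "c \<in> endK S Fs (tdown c) \<nu>" using C(2) tdc by blast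
  moreover have "c \<in> V" using c(1) E_V by auto
  ultimately show ?thesis unfolding I_def using c(1,3) by blast
qed

lemma tdown_child: assumes "c \<in> V" "t \<in> V" "rpath c = rpath t @ [c]"
  shows "tdown c = {x. tree_le E r x t}"
proof -
  have dc: "distinct (rpath c)" using rpath(1)[OF assms(1)] by (simp add: gpath_walk)
  have "tdown c = set (rpath c) - {c}" unfolding tdown_def using set_rpath_le[OF assms(1)] by auto
  also have "\<dots> = set (rpath t)" using assms(3) dc by auto
  also have "\<dots> = {x. tree_le E r x t}" using set_rpath_le[OF assms(2)] .
  finally show "tdown c = {x. tree_le E r x t}" .
qed

lemma surj_ray:
  assumes nu: "\<nu> \<in> cends S Fs" and cl: "in_closure S Fs V \<nu>"
  shows "\<exists>t. gray V E t \<and> t 0 = r \<and> (\<forall>n. I \<nu> (t n)) \<and>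
            (\<forall>n. rpath (t (Suc n)) = rpath (t n) @ [t (Suc n)])"
proof -
  define P where "P x c \<longleftrightarrow> (x, c) \<in> E \<and> rpath c = rpath x @ [c] \<and> I \<nu> c" for x c
  define nxt where "nxt x = (SOME c. P x c)" for x
  define t where "t = rec_nat r (\<lambda>_ x. nxt x)"
  have t0: "t 0 = r" and tS: "t (Suc n) = nxt (t n)" for n unfolding t_def by simp_all
  have It: "I \<nu> (t n)" for n
  proof (induction n)
    case 0 then show ?case using I_base[OF nu cl] t0 by simp
  next
    case (Suc n)
    have "\<exists>c. P (t n) c" unfolding P_def using I_step[OF nu cl Suc] .
    then have "P (t n) (nxt (t n))" unfolding nxt_def by (rule someI_ex)
    then show ?case using tS unfolding P_def by simp
  qed
  have Pt: "P (t n) (t (Suc n))" for n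
  proof -
    have "\<exists>c. P (t n) c" unfolding P_def using I_step[OF nu cl It] .
    then have "P (t n) (nxt (t n))" unfolding nxt_def by (rule someI_ex)
    then show ?thesis using tS by simp
  qed
  have len: "length (rpath (t n)) = Suc n" for n
  proof (induction n)
    case 0 then show ?case using t0 rpath_r by simp
  next
    case (Suc n) then show ?case using Pt[of n] unfolding P_def by simp
  qed
  have tV: "t n \<in> V" for n using It unfolding I_def by simp
  have "inj t"
  proof (rule injI)
    fix i j assume "t i = t j"
    then have "length (rpath (t i)) = length (rpath (t j))" by simp
    then show "i = j" using len by simp
  qed
  then have "gray V E t" unfolding gray_def using tV Pt unfolding P_def by simp
  then show ?thesis using t0 It Pt unfolding P_def by blast
qed

lemma conv_main:
  assumes nu: "\<nu> \<in> cends S Fs" and cl: "in_closure S Fs V \<nu>"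
    and t: "gray V E t" "t 0 = r" "\<And>n. I \<nu> (t n)" "\<And>n. rpath (t (Suc n)) = rpath (t n) @ [t (Suc n)]"
  shows "converges S Fs (range t) \<nu>"
proof -
  have tV: "t n \<in> V" for n using gray_V[OF t(1)] .
  have td: "tdown (t (Suc n)) = {x. tree_le E r x (t n)}" for n using tdown_child[OF tV tV t(4)] .
  have upK: "tree_le E r (t (Suc p)) u" if "u \<in> endK S Fs Z \<nu>" "u \<in> V" "finite Z" "Z \<subseteq> S"
     "{x. tree_le E r x (t p)} \<subseteq> Z" for u Z p
  proof -
    have "endK S Fs Z \<nu> \<subseteq> endK S Fs {x. tree_le E r x (t p)} \<nu>"
      using endK_mono[OF conn nu that(3,4,5)] .
    then have "u \<in> endK S Fs (tdown (t (Suc p))) \<nu>" using that(1) td by auto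
    then show ?thesis using K1[OF nu t(3) _ that(2)] by blast
  qed
  have L: "\<exists>i\<ge>p. t i \<in> endK S Fs X \<nu>" if X: "finite X" "X \<subseteq> S" for X p
  proof -
    define Z where "Z = X \<union> {x. tree_le E r x (t p)}"
    have Z: "finite Z" "Z \<subseteq> S" unfolding Z_def using X le_set_fin by auto
    have XZ: "X \<subseteq> Z" unfolding Z_def by blast
    obtain u where u: "u \<in> endK S Fs Z \<nu>" "u \<in> V" using closure_pt[OF cl Z] by blast
    have KZ: "endK S Fs Z \<nu> \<in> ccomponents S Fs (S - Z)" using endK_comp[OF conn nu Z] .
    have KZX: "endK S Fs Z \<nu> \<subseteq> endK S Fs X \<nu>" using endK_mono[OF conn nu Z XZ] .
    have tpu: "tree_le E r (t (Suc p)) u" using upK[OF u Z] unfolding Z_def by blast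
    define J where "J = {j. tree_le E r (t j) u}"
    have "J \<subseteq> t -` {x. tree_le E r x u}" unfolding J_def by auto
    moreover have "finite (t -` {x. tree_le E r x u})"
      using finite_vimageI[OF le_set_fin(1) gray_inj[OF t(1)]] .
    ultimately have fJ: "finite J" by (rule finite_subset)
    have SpJ: "Suc p \<in> J" unfolding J_def using tpu by simp
    define j where "j = Max J"
    have jJ: "j \<in> J" unfolding j_def using fJ SpJ Max_in by blast
    have jmax: "\<And>i. i \<in> J \<Longrightarrow> i \<le> j" unfolding j_def using fJ Max_ge by blast
    have pj: "Suc p \<le> j" using jmax[OF SpJ] .
    have tju: "tree_le E r (t j) u" using jJ unfolding J_def by simp
    show ?thesis
    proof (cases "u = t j")
      case True
      then show ?thesis using pj u(1) KZX by (intro exI[where x=j]) auto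
    next
      case False
      define Z' where "Z' = X \<union> {x. tree_le E r x (t j)}"
      have Z': "finite Z'" "Z' \<subseteq> S" unfolding Z'_def using X le_set_fin by auto
      have "tree_le E r (t p) (t j)" using ray_le_ray[OF t(1,2)] pj by simp
      then have ZZ': "Z \<subseteq> Z'" unfolding Z_def Z'_def using tree_le_trans by blast
      obtain u' where u': "u' \<in> endK S Fs Z' \<nu>" "u' \<in> V" using closure_pt[OF cl Z'] by blast
      have u'Z: "u' \<in> endK S Fs Z \<nu>" using endK_mono[OF conn nu Z' ZZ'] u'(1) by blast
      have tsu': "tree_le E r (t (Suc j)) u'" using upK[OF u' Z'] unfolding Z'_def by blast
      have nsj: "\<not> tree_le E r (t (Suc j)) u"
      proof
        assume "tree_le E r (t (Suc j)) u"
        then have "Suc j \<in> J" unfolding J_def by simp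
        then show False using jmax by fastforce
      qed
      have nc1: "\<not> tree_le E r u' u" using nsj tsu' tree_le_trans by blast
      have nc2: "\<not> tree_le E r u u'"
      proof
        assume uu': "tree_le E r u u'"
        have "tree_le E r u (t (Suc j))" using tree_le_total[OF uu' tsu'] nsj by blast
        then obtain i where i: "i \<le> Suc j" "u = t i" using ray_le_iff[OF t(1,2)] by auto
        have "i \<in> J" unfolding J_def using i(2) tree_le_refl u(2) by simp
        then have "i \<le> j" using jmax by simp
        moreover have "j \<le> i" using tju i(2) ray_le_ray[OF t(1,2)] by simp
        ultimately show False using False i(2) by simp
      qed
      have Kc: "cconnected S Fs (endK S Fs Z \<nu>)" using ccomp_D[OF KZ] by blast
      obtain w where w: "w \<in> endK S Fs Z \<nu>" "tree_le E r w u" "tree_le E r w u'"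
        using N1[OF Kc u(1) u(2) u'Z u'(2) nc2 nc1] by blast
      have "\<not> tree_le E r (t (Suc j)) w" using w(2) nsj tree_le_trans by blast
      then have "tree_le E r w (t (Suc j))" using tree_le_total[OF w(3) tsu'] by blast
      then obtain i where i: "w = t i" using ray_le_iff[OF t(1,2)] by auto
      have "w \<notin> Z" using w(1) ccomp_D[OF KZ] by blast
      then have "\<not> tree_le E r (t i) (t p)" unfolding Z_def using i by blast
      then have "i \<ge> p" using ray_le_ray[OF t(1,2)] by simp
      then show ?thesis using w(1) KZX i by blast
    qed
  qed
  obtain N where N: "necklace S Fs N" "converges S Fs (range t) (ncls S Fs N)"
    using ray_converges[OF t(1,2)] by blast
  have eta_c: "ncls S Fs N \<in> cends S Fs" using N(1) cends_iff by blast
  show ?thesis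
    unfolding converges_def
  proof (intro conjI allI impI)
    show "infinite (range t)" using N(2) unfolding converges_def by simp
    fix X assume X: "finite X \<and> X \<subseteq> S"
    define K where "K = endK S Fs X \<nu>"
    define K2 where "K2 = endK S Fs X (ncls S Fs N)"
    have K: "K \<in> ccomponents S Fs (S - X)" unfolding K_def using endK_comp[OF conn nu] X by blast
    have K2: "K2 \<in> ccomponents S Fs (S - X)" unfolding K2_def using endK_comp[OF conn eta_c] X by blast
    have f2: "finite (range t - K2)" using N(2) X unfolding converges_def K2_def by blast
    have "finite (t -` (range t - K2))" using finite_vimageI[OF f2 gray_inj[OF t(1)]] .
    then obtain B where B: "\<forall>i\<in>t -` (range t - K2). i < B" using finite_nat_set_iff_bounded by blast
    obtain i where i: "i \<ge> B" "t i \<in> K" using L[of X B] X unfolding K_def by blast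
    have "t i \<in> K2"
    proof (rule ccontr)
      assume "t i \<notin> K2"
      then have "i \<in> t -` (range t - K2)" by simp
      from bspec[OF B this] have "i < B" .
      then show False using i(1) by simp
    qed
    then have "K = K2" using ccomp_eq[OF conn K K2] i(2) by blast
    then show "finite (range t - endK S Fs X \<nu>)" using f2 unfolding K_def by simp
  qed
qed

lemma eta_surj:
  assumes nu: "\<nu> \<in> cends S Fs" and cl: "in_closure S Fs V \<nu>"
  shows "\<exists>\<omega>\<in>gends V E. eta \<omega> = \<nu>"
proof -
  obtain t where t: "gray V E t" "t 0 = r" "\<forall>n. I \<nu> (t n)"
    "\<forall>n. rpath (t (Suc n)) = rpath (t n) @ [t (Suc n)]" using surj_ray[OF nu cl] by blast
  define \<omega> where "\<omega> = gcls V E t"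
  have w: "\<omega> \<in> gends V E" unfolding \<omega>_def using t(1) gends_iff by blast
  have "t = root_ray r \<omega>" using root_ray_props(4)[OF w] gcls_self[OF t(1)] t(2) unfolding \<omega>_def by blast
  moreover have "converges S Fs (range t) \<nu>" using conv_main[OF nu cl t(1,2)] t(3,4) by blast
  ultimately have "eta \<omega> = \<nu>" using eta_eq[OF w nu] by simp
  then show ?thesis using w by blast
qed

end

theorem theorem5p2:
  fixes S :: "'a set" and Fs :: "'a set set"
    and V :: "'a set" and E :: "('a \<times> 'a) set" and r :: 'a
  assumes "connectoid S Fs"
    and "normal_tree S Fs V E r"
  shows "(\<forall>\<omega>\<in>gends V E. \<exists>!\<nu>. \<nu> \<in> cends S Fs \<and>
            converges S Fs (range (root_ray r \<omega>)) \<nu>)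
       \<and> bij_betw (\<lambda>\<omega>. THE \<nu>. \<nu> \<in> cends S Fs \<and> converges S Fs (range (root_ray r \<omega>)) \<nu>)
           (gends V E) {\<nu> \<in> cends S Fs. in_closure S Fs V \<nu>}"
proof -
  have rt: "rooted_tree V E r"
    using assms(2) unfolding normal_tree_def weak_normal_tree_def by (elim conjE)
  interpret ntree V E r S Fs
    by (unfold_locales) (use rt assms in auto)
  have lam: "(\<lambda>\<omega>. THE \<nu>. \<nu> \<in> cends S Fs \<and> converges S Fs (range (root_ray r \<omega>)) \<nu>) = eta"
    by (rule ext) (simp add: eta_def)
  have p1: "\<forall>\<omega>\<in>gends V E. \<exists>!\<nu>. \<nu> \<in> cends S Fs \<and> converges S Fs (range (root_ray r \<omega>)) \<nu>"
    using conv_unique_ex by blast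
  have inj: "inj_on eta (gends V E)" by (rule inj_onI) (rule eta_inj)
  have img: "eta ` gends V E = {\<nu> \<in> cends S Fs. in_closure S Fs V \<nu>}"
  proof
    show "eta ` gends V E \<subseteq> {\<nu> \<in> cends S Fs. in_closure S Fs V \<nu>}"
      using eta(1) eta_closure by blast
    show "{\<nu> \<in> cends S Fs. in_closure S Fs V \<nu>} \<subseteq> eta ` gends V E"
    proof
      fix \<nu> assume "\<nu> \<in> {\<nu> \<in> cends S Fs. in_closure S Fs V \<nu>}"
      then obtain \<omega> where "\<omega> \<in> gends V E" "eta \<omega> = \<nu>" using eta_surj by blast
      then show "\<nu> \<in> eta ` gends V E" by blast
    qed
  qed
  show ?thesis unfolding lam bij_betw_def using p1 inj img by blast
qed


end
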